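(* Let $f\colon\mathbb{R}^2\to\mathbb{R}$, $f(x_1,x_3)=\frac14(x_3^2-1)$. There is a smooth family of functions $f_t^\delta\colon[-2,2]\times[-2,2]\to\mathbb{R}$, parametrised by $\delta\in(0,\frac1{10}]$ and $t\in[-1,1]$, with the following properties: (1) $f_{-1}^\delta=f$; (2) $f_t^\delta$ is independent of $t$ outside the square $[-1-2\delta,1+2\delta]\times[-1-2\delta,1+2\delta]$; (3) for $t<0$ the zero-set of $f_t^\delta$ consists of two arcs, homotopic to those of $f$ (namely the segments $\{x_3=1\}$ and $\{x_3=-1\}$); for $t=0$ the zero-set is a letter X (two arcs crossing transversally at a single point); and for $t>0$ it again consists of two arcs, connecting the endpoints the other way; moreover the vanishing is of order exactly $1$, except at the singular point when $t=0$, where it is quadratic; (4) $f_t^\delta$ is bounded in $C^1$, uniformly in $t$ and $\delta$. *)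

theory Defs
  imports "HOL-Analysis.Analysis"
begin

text \<open>C-infinity smoothness of a real-valued function on a set S: f is differentiable
  (within S) at every point of S and every directional derivative is again smooth.
  (Coinductive, so derivatives of all orders exist.)\<close>
coinductive smooth_on :: "'a::real_normed_vector set \<Rightarrow> ('a \<Rightarrow> real) \<Rightarrow> bool" for S where
  smooth_onI: "(\<And>x. x \<in> S \<Longrightarrow> (f has_derivative f' x) (at x within S))
     \<Longrightarrow> (\<And>v. smooth_on S (\<lambda>x. f' x v)) \<Longrightarrow> smooth_on S f"

definition d1 :: "(real \<times> real \<Rightarrow> real) \<Rightarrow> real \<times> real \<Rightarrow> real" where
  "d1 g p = deriv (\<lambda>s. g (s, snd p)) (fst p)"

definition d2 :: "(real \<times> real \<Rightarrow> real) \<Rightarrow> real \<times> real \<Rightarrow> real" where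
  "d2 g p = deriv (\<lambda>s. g (fst p, s)) (snd p)"

definition sq :: "real \<Rightarrow> real \<Rightarrow> (real \<times> real) set" where
  "sq a b = {a..b} \<times> {a..b}"

definition f0 :: "real \<times> real \<Rightarrow> real" where
  "f0 p = ((snd p)^2 - 1) / 4"

definition zeroset :: "(real \<times> real \<Rightarrow> real) \<Rightarrow> (real \<times> real) set" where
  "zeroset g = {p \<in> sq (-2) 2. g p = 0}"

definition order_one :: "(real \<times> real \<Rightarrow> real) \<Rightarrow> real \<times> real \<Rightarrow> bool" where
  "order_one g p \<longleftrightarrow> g p = 0 \<and> (d1 g p, d2 g p) \<noteq> (0, 0)"

text \<open>Quadratic (nondegenerate, saddle-type) vanishing at p: value and gradient vanish,
  Hessian is nondegenerate and indefinite (so the zero set is locally two transversal curves).\<close>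
definition quadratic_crossing :: "(real \<times> real \<Rightarrow> real) \<Rightarrow> real \<times> real \<Rightarrow> bool" where
  "quadratic_crossing g p \<longleftrightarrow> g p = 0 \<and> d1 g p = 0 \<and> d2 g p = 0 \<and>
     d1 (d1 g) p * d2 (d2 g) p - d2 (d1 g) p * d1 (d2 g) p < 0"

end

theory Submission
  imports Defs
begin


lemma smooth_onD:
  assumes "smooth_on S f"
  shows "\<exists>f'. (\<forall>x\<in>S. (f has_derivative f' x) (at x within S)) \<and> (\<forall>v. smooth_on S (\<lambda>x. f' x v))"
  using assms by (cases rule: smooth_on.cases) blast

lemma smooth_const_aux:
  assumes "\<exists>c. f = (\<lambda>x. c)" shows "smooth_on S f"
  using assms
proof (coinduction arbitrary: f rule: smooth_on.coinduct)
  case (smooth_on f)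
  then obtain c0 where f: "f = (\<lambda>x. c0)" by blast
  have "((\<lambda>x. c0) has_derivative (\<lambda>v. 0)) (at x within S)" for x by (rule has_derivative_const)
  then show ?case unfolding f
    by (intro exI[of _ "\<lambda>x. c0"] exI[of _ "\<lambda>x v. 0"]) auto
qed

lemma smooth_const: "smooth_on S (\<lambda>x. c)"
  by (rule smooth_const_aux) blast

lemma smooth_linear: "bounded_linear l \<Longrightarrow> smooth_on S l"
  by (rule smooth_onI[where f'="\<lambda>x. l"]) (auto intro: bounded_linear_imp_has_derivative smooth_const)

definition prsum :: "(('a \<Rightarrow> real) \<times> ('a \<Rightarrow> real)) list \<Rightarrow> 'a \<Rightarrow> real" where
  "prsum xs x = sum_list (map (\<lambda>(f,g). f x * g x) xs)"

lemma sprod_deriv: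
  assumes "\<forall>(f,g)\<in>set xs. smooth_on S f \<and> smooth_on S g"
  shows "\<exists>h'. (\<forall>x\<in>S. (prsum xs has_derivative h' x) (at x within S)) \<and>
     (\<forall>v. \<exists>ys. (\<forall>(f,g)\<in>set ys. smooth_on S f \<and> smooth_on S g) \<and> (\<lambda>x. h' x v) = prsum ys)"
  using assms
proof (induction xs)
  case Nil
  then show ?case
    by (intro exI[of _ "\<lambda>x v. 0"]) (auto simp: prsum_def intro!: exI[of _ "[]"])
next
  case (Cons p xs)
  obtain f g where p: "p = (f,g)" by fastforce
  from Cons.prems p have sf: "smooth_on S f" and sg: "smooth_on S g" by auto
  from Cons.IH Cons.prems obtain h' where
    h1: "\<forall>x\<in>S. (prsum xs has_derivative h' x) (at x within S)" and
    h2: "\<forall>v. \<exists>ys. (\<forall>(f,g)\<in>set ys. smooth_on S f \<and> smooth_on S g) \<and> (\<lambda>x. h' x v) = prsum ys"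
    by auto
  obtain f' where f1: "\<forall>x\<in>S. (f has_derivative f' x) (at x within S)" and f2: "\<forall>v. smooth_on S (\<lambda>x. f' x v)"
    using smooth_onD[OF sf] by blast
  obtain g' where g1: "\<forall>x\<in>S. (g has_derivative g' x) (at x within S)" and g2: "\<forall>v. smooth_on S (\<lambda>x. g' x v)"
    using smooth_onD[OF sg] by blast
  have eq: "prsum (p # xs) = (\<lambda>x. f x * g x + prsum xs x)"
    by (auto simp: prsum_def p)
  show ?case
  proof (intro exI[of _ "\<lambda>x v. f x * g' x v + f' x v * g x + h' x v"] conjI ballI allI)
    fix x assume "x \<in> S"
    then show "(prsum (p # xs) has_derivative (\<lambda>v. f x * g' x v + f' x v * g x + h' x v)) (at x within S)"
      unfolding eq using f1 g1 h1
      by (auto intro!: derivative_eq_intros)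
  next
    fix v
    obtain ys where ys: "\<forall>(f,g)\<in>set ys. smooth_on S f \<and> smooth_on S g" "(\<lambda>x. h' x v) = prsum ys"
      using h2 by blast
    show "\<exists>ys. (\<forall>(f, g)\<in>set ys. smooth_on S f \<and> smooth_on S g) \<and>
          (\<lambda>x. f x * g' x v + f' x v * g x + h' x v) = prsum ys"
      apply (rule exI[of _ "(f, \<lambda>x. g' x v) # (\<lambda>x. f' x v, g) # ys"])
      using ys sf sg f2 g2 by (auto simp: prsum_def fun_eq_iff)
  qed
qed

lemma smooth_sprod:
  assumes "\<forall>(f,g)\<in>set xs. smooth_on S f \<and> smooth_on S g"
  shows "smooth_on S (prsum xs)"
proof -
  have "smooth_on S h" if "\<exists>xs. (\<forall>(f,g)\<in>set xs. smooth_on S f \<and> smooth_on S g) \<and> h = prsum xs" for h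
    using that
  proof (coinduction arbitrary: h rule: smooth_on.coinduct)
    case (smooth_on h)
    then obtain xs where xs: "\<forall>(f,g)\<in>set xs. smooth_on S f \<and> smooth_on S g" "h = prsum xs" by blast
    from sprod_deriv[OF xs(1)] obtain h' where
      "\<forall>x\<in>S. (prsum xs has_derivative h' x) (at x within S)"
      "\<forall>v. \<exists>ys. (\<forall>(f,g)\<in>set ys. smooth_on S f \<and> smooth_on S g) \<and> (\<lambda>x. h' x v) = prsum ys"
      by blast
    then show ?case using xs(2) by blast
  qed
  then show ?thesis using assms by blast
qed

lemma smooth_mult:
  assumes "smooth_on S f" "smooth_on S g"
  shows "smooth_on S (\<lambda>x. f x * g x)"
proof -
  have "smooth_on S (prsum [(f,g)])" using assms by (intro smooth_sprod) auto
  moreover have "prsum [(f,g)] = (\<lambda>x. f x * g x)" by (simp add: prsum_def fun_eq_iff)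
  ultimately show ?thesis by simp
qed

lemma smooth_add:
  assumes "smooth_on S f" "smooth_on S g"
  shows "smooth_on S (\<lambda>x. f x + g x)"
proof -
  have "smooth_on S (prsum [(f,\<lambda>x. 1), (g, \<lambda>x. 1)])" using assms smooth_const by (intro smooth_sprod) auto
  moreover have "prsum [(f,\<lambda>x. 1), (g, \<lambda>x. 1)] = (\<lambda>x. f x + g x)" by (simp add: prsum_def fun_eq_iff)
  ultimately show ?thesis by simp
qed

lemma smooth_cmult: "smooth_on S f \<Longrightarrow> smooth_on S (\<lambda>x. c * f x)"
  using smooth_mult[OF smooth_const] by blast

lemma smooth_minus: "smooth_on S f \<Longrightarrow> smooth_on S g \<Longrightarrow> smooth_on S (\<lambda>x. f x - g x)"
  using smooth_add[of S f "\<lambda>x. (-1) * g x"] smooth_cmult[of S g "-1"] by simp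

lemma smooth_power: "smooth_on S f \<Longrightarrow> smooth_on S (\<lambda>x. f x ^ n)"
  by (induction n) (auto intro: smooth_const smooth_mult)

lemma real_lin_scale: "bounded_linear (l :: real \<Rightarrow> real) \<Longrightarrow> l v = v * l 1"
proof -
  assume "bounded_linear l"
  then interpret bounded_linear l .
  have "l (v *\<^sub>R 1) = v *\<^sub>R l 1" by (rule scaleR)
  then show ?thesis by simp
qed

definition cmpsum :: "(real set \<times> (real \<Rightarrow> real) \<times> ('a \<Rightarrow> real) \<times> ('a \<Rightarrow> real)) list \<Rightarrow> 'a \<Rightarrow> real" where
  "cmpsum xs x = sum_list (map (\<lambda>(T,z,f,g). z (f x) * g x) xs)"

definition okc where
  "okc S xs \<longleftrightarrow> (\<forall>(T,z,f,g)\<in>set xs. open T \<and> f ` S \<subseteq> T \<and> smooth_on T z \<and> smooth_on S f \<and> smooth_on S g)"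

lemma scomp_deriv:
  assumes "okc S xs"
  shows "\<exists>h'. (\<forall>x\<in>S. (cmpsum xs has_derivative h' x) (at x within S)) \<and>
     (\<forall>v. \<exists>ys. okc S ys \<and> (\<lambda>x. h' x v) = cmpsum ys)"
  using assms
proof (induction xs)
  case Nil
  then show ?case
    by (intro exI[of _ "\<lambda>x v. 0"]) (auto simp: cmpsum_def okc_def intro!: exI[of _ "[]"])
next
  case (Cons p xs)
  obtain T z f g where p: "p = (T,z,f,g)" by (cases p) auto
  from Cons.prems p have oT: "open T" and fT: "f ` S \<subseteq> T" and sz: "smooth_on T z" and sf: "smooth_on S f"
    and sg: "smooth_on S g" and okxs: "okc S xs" by (auto simp: okc_def)
  from Cons.IH okxs obtain h' where
    h1: "\<forall>x\<in>S. (cmpsum xs has_derivative h' x) (at x within S)" and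
    h2: "\<forall>v. \<exists>ys. okc S ys \<and> (\<lambda>x. h' x v) = cmpsum ys"
    by auto
  obtain f' where f1: "\<forall>x\<in>S. (f has_derivative f' x) (at x within S)" and f2: "\<forall>v. smooth_on S (\<lambda>x. f' x v)"
    using smooth_onD[OF sf] by blast
  obtain g' where g1: "\<forall>x\<in>S. (g has_derivative g' x) (at x within S)" and g2: "\<forall>v. smooth_on S (\<lambda>x. g' x v)"
    using smooth_onD[OF sg] by blast
  obtain z' where z1: "\<forall>y\<in>T. (z has_derivative z' y) (at y within T)" and z2: "\<forall>v. smooth_on T (\<lambda>y. z' y v)"
    using smooth_onD[OF sz] by blast
  have eq: "cmpsum (p # xs) = (\<lambda>x. z (f x) * g x + cmpsum xs x)"
    by (auto simp: cmpsum_def p)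
  have zc: "((\<lambda>x. z (f x)) has_derivative (\<lambda>v. z' (f x) 1 * f' x v)) (at x within S)" if x: "x \<in> S" for x
  proof -
    have fx: "f x \<in> T" using fT x by blast
    have "(z has_derivative z' (f x)) (at (f x) within T)"
      using z1 fx by blast
    then have "(z has_derivative z' (f x)) (at (f x))"
      by (simp add: at_within_open[OF fx oT])
    then have zd: "(z has_derivative z' (f x)) (at (f x) within f ` S)"
      by (rule has_derivative_subset) auto
    have ch: "(z \<circ> f has_derivative z' (f x) \<circ> f' x) (at x within S)"
      by (rule diff_chain_within[OF _ zd]) (use f1 x in auto)
    have bl: "bounded_linear (z' (f x))" using zd by (rule has_derivative_bounded_linear)
    have "z' (f x) (f' x v) = z' (f x) 1 * f' x v" for v
      using real_lin_scale[OF bl, of "f' x v"] by (simp only: mult.commute)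
    then have "z' (f x) \<circ> f' x = (\<lambda>v. z' (f x) 1 * f' x v)"
      by (simp add: fun_eq_iff)
    with ch show ?thesis by (simp add: o_def)
  qed
  show ?case
  proof (intro exI[of _ "\<lambda>x v. z' (f x) 1 * f' x v * g x + z (f x) * g' x v + h' x v"] conjI ballI allI)
    fix x assume x: "x \<in> S"
    show "(cmpsum (p # xs) has_derivative (\<lambda>v. z' (f x) 1 * f' x v * g x + z (f x) * g' x v + h' x v)) (at x within S)"
      unfolding eq using zc[OF x] g1 h1 x
      by (auto intro!: derivative_eq_intros)
  next
    fix v
    obtain ys where ys: "okc S ys" "(\<lambda>x. h' x v) = cmpsum ys"
      using h2 by blast
    have "smooth_on S (\<lambda>x. f' x v * g x)" using f2 sg by (intro smooth_mult) auto
    then show "\<exists>ys. okc S ys \<and> (\<lambda>x. z' (f x) 1 * f' x v * g x + z (f x) * g' x v + h' x v) = cmpsum ys"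
      apply (intro exI[of _ "(T, \<lambda>y. z' y 1, f, \<lambda>x. f' x v * g x) # (T, z, f, \<lambda>x. g' x v) # ys"])
      using ys oT fT sz sf sg f2 g2 z2 by (auto simp: cmpsum_def okc_def fun_eq_iff)
  qed
qed

lemma smooth_scomp:
  assumes "okc S xs"
  shows "smooth_on S (cmpsum xs)"
proof -
  have "smooth_on S h" if "\<exists>xs. okc S xs \<and> h = cmpsum xs" for h
    using that
  proof (coinduction arbitrary: h rule: smooth_on.coinduct)
    case (smooth_on h)
    then obtain xs where xs: "okc S xs" "h = cmpsum xs" by blast
    from scomp_deriv[OF xs(1)] obtain h' where
      "\<forall>x\<in>S. (cmpsum xs has_derivative h' x) (at x within S)"
      "\<forall>v. \<exists>ys. okc S ys \<and> (\<lambda>x. h' x v) = cmpsum ys"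
      by blast
    then show ?case using xs(2) by blast
  qed
  then show ?thesis using assms by blast
qed

lemma smooth_compose:
  assumes "smooth_on T z" "open T" "\<And>x. x \<in> S \<Longrightarrow> f x \<in> T" "smooth_on S f"
  shows "smooth_on S (\<lambda>x. z (f x))"
proof -
  have "smooth_on S (cmpsum [(T, z, f, \<lambda>x. 1)])"
    using assms smooth_const by (intro smooth_scomp) (auto simp: okc_def)
  moreover have "cmpsum [(T, z, f, \<lambda>x. 1)] = (\<lambda>x. z (f x))" by (simp add: cmpsum_def fun_eq_iff)
  ultimately show ?thesis by simp
qed




definition tm :: "real \<Rightarrow> nat \<Rightarrow> real \<Rightarrow> real" where
  "tm c k x = c * inverse x ^ k * exp (- inverse x)"

definition sl :: "(real \<times> nat) list \<Rightarrow> real \<Rightarrow> real" where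
  "sl xs x = (\<Sum>(c,k)\<leftarrow>xs. tm c k x)"

definition pl :: "(real \<times> nat) list \<Rightarrow> real \<Rightarrow> real" where
  "pl xs x = (if 0 < x then sl xs x else 0)"

definition dl :: "(real \<times> nat) list \<Rightarrow> (real \<times> nat) list" where
  "dl xs = concat (map (\<lambda>(c,k). [(- c * real k, Suc k), (c, k+2)]) xs)"

lemma tm_deriv:
  assumes "0 < x"
  shows "(tm c k has_real_derivative (tm (- c * real k) (Suc k) x + tm c (k+2) x)) (at x)"
proof -
  have "(tm c k has_real_derivative
      (c * (real k * inverse x ^ (k - 1) * (- (inverse x ^ 2))) * exp (- inverse x) +
       c * inverse x ^ k * (exp (- inverse x) * (inverse x ^ 2)))) (at x)"
    unfolding tm_def using assms
    by (auto intro!: derivative_eq_intros simp: power2_eq_square)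
  moreover have "c * (real k * inverse x ^ (k - 1) * (- (inverse x ^ 2))) * exp (- inverse x) +
       c * inverse x ^ k * (exp (- inverse x) * (inverse x ^ 2)) = tm (- c * real k) (Suc k) x + tm c (k+2) x"
  proof (cases k)
    case 0 then show ?thesis by (simp add: tm_def power2_eq_square)
  next
    case (Suc m)
    then show ?thesis by (simp add: tm_def power2_eq_square algebra_simps)
  qed
  ultimately show ?thesis by simp
qed

lemma sl_Cons: "sl ((c,k) # xs) x = tm c k x + sl xs x"
  by (simp add: sl_def)

lemma sl_Nil: "sl [] x = 0"
  by (simp add: sl_def)

lemma sl_append: "sl (xs @ ys) x = sl xs x + sl ys x"
  by (simp add: sl_def)

lemma dl_Cons: "dl ((c,k) # xs) = [(- c * real k, Suc k), (c, k+2)] @ dl xs"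
  by (simp add: dl_def)

lemma sl_deriv:
  assumes "0 < x"
  shows "(sl xs has_real_derivative sl (dl xs) x) (at x)"
proof (induction xs)
  case Nil
  then show ?case by (simp add: sl_def dl_def)
next
  case (Cons p xs)
  obtain c k where p: "p = (c,k)" by fastforce
  have e: "sl (p # xs) = (\<lambda>x. tm c k x + sl xs x)" by (simp add: p sl_Cons fun_eq_iff)
  show ?case unfolding e p dl_Cons sl_append
    using tm_deriv[OF assms, of c k] Cons.IH
    by (auto intro!: derivative_eq_intros simp: sl_Cons sl_Nil)
qed

lemma lim_top:
  "((\<lambda>y. (\<Sum>(c,k)\<leftarrow>xs. c * y ^ k) * exp (- y)) \<longlongrightarrow> (0::real)) at_top"
proof (induction xs)
  case Nil
  then show ?case by simp
next
  case (Cons p xs)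
  obtain c k where p: "p = (c,k)" by fastforce
  have e: "(\<lambda>y. (\<Sum>(c,k)\<leftarrow>p#xs. c * y ^ k) * exp (- y)) =
      (\<lambda>y. c * (y ^ k / exp y) + (\<Sum>(c,k)\<leftarrow>xs. c * y ^ k) * exp (- y))"
    by (auto simp: p fun_eq_iff algebra_simps exp_minus field_simps)
  show ?case unfolding e
    using tendsto_add[OF tendsto_mult_right_zero[OF tendsto_power_div_exp_0] Cons.IH]
    by simp
qed

lemma pl_deriv: "(pl xs has_real_derivative pl (dl xs) x) (at x)"
proof -
  consider "x > 0" | "x < 0" | "x = 0" by linarith
  then show ?thesis
  proof cases
    case 1
    have "(pl xs has_real_derivative sl (dl xs) x) (at x)"
      by (rule has_field_derivative_transform_within_open[OF sl_deriv[OF 1], of "{0<..}"])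
        (use 1 in \<open>auto simp: pl_def\<close>)
    then show ?thesis using 1 by (simp add: pl_def)
  next
    case 2
    have "((\<lambda>_. 0) has_real_derivative 0) (at x)" by simp
    then have "(pl xs has_real_derivative 0) (at x)"
      by (rule has_field_derivative_transform_within_open[of _ _ _ "{..<0}"])
        (use 2 in \<open>auto simp: pl_def\<close>)
    then show ?thesis using 2 by (simp add: pl_def)
  next
    case 3
    have r: "((\<lambda>y. pl xs y / y) \<longlongrightarrow> 0) (at_right 0)"
    proof -
      let ?g = "\<lambda>y. (\<Sum>(c,k)\<leftarrow>map (\<lambda>(c,k). (c, Suc k)) xs. c * y ^ k) * exp (- y)"
      have "((\<lambda>h. ?g (inverse h)) \<longlongrightarrow> 0) (at_right 0)"
        by (rule filterlim_compose[OF lim_top filterlim_inverse_at_top_right])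
      moreover have "\<forall>\<^sub>F h in at_right 0. ?g (inverse h) = pl xs h / h"
      proof -
        have hf: "?g (inverse h) = pl xs h / h" if "h > 0" for h :: real
        proof -
          have "sl ys h / h = (\<Sum>(c,k)\<leftarrow>map (\<lambda>(c,k). (c, Suc k)) ys. c * inverse h ^ k) * exp (- inverse h)" for ys
          proof (induction ys)
            case Nil then show ?case by (simp add: sl_def)
          next
            case (Cons p ys)
            obtain c k where p: "p = (c,k)" by fastforce
            have "sl (p # ys) h / h = tm c k h / h + sl ys h / h"
              by (simp add: p sl_Cons add_divide_distrib)
            also have "tm c k h / h = c * inverse h ^ Suc k * exp (- inverse h)"
              by (simp add: tm_def divide_inverse)
            finally show ?case using Cons.IH by (simp add: p distrib_right)
          qed
          then have "sl xs h / h = ?g (inverse h)" .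
          then show ?thesis using that by (simp add: pl_def)
        qed
        show ?thesis
          by (rule eventually_mono[OF eventually_at_right_less]) (rule hf)
      qed
      ultimately show ?thesis by (rule Lim_transform_eventually)
    qed
    have l: "((\<lambda>y. pl xs y / y) \<longlongrightarrow> 0) (at_left 0)"
    proof -
      have "\<forall>\<^sub>F h in at_left 0. 0 = pl xs h / (h::real)"
        by (rule eventually_at_leftI[of "-1"]) (auto simp: pl_def)
      then show ?thesis by (rule Lim_transform_eventually[OF tendsto_const])
    qed
    have "((\<lambda>y. (pl xs y - pl xs 0) / (y - 0)) \<longlongrightarrow> 0) (at 0)"
      using filterlim_split_at[OF l r] by (simp add: pl_def)
    then have "(pl xs has_real_derivative 0) (at 0)" by (simp add: has_field_derivative_iff)
    then show ?thesis using 3 by (simp add: pl_def)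
  qed
qed

lemma pl_smult: "pl xs x * v = pl (map (\<lambda>(c,k). (c * v, k)) xs) x"
  by (induction xs) (auto simp: pl_def sl_def tm_def algebra_simps)

lemma smooth_pl: "smooth_on S (pl xs)"
proof -
  have "smooth_on S h" if "\<exists>xs. h = pl xs" for h
    using that
  proof (coinduction arbitrary: h rule: smooth_on.coinduct)
    case (smooth_on h)
    then obtain xs where h: "h = pl xs" by blast
    have d: "(pl xs has_derivative (\<lambda>v. pl (dl xs) x * v)) (at x within S)" for x
      using has_field_derivative_at_within[OF pl_deriv] by (simp add: has_field_derivative_def)
    have "\<exists>ys. (\<lambda>x. pl (dl xs) x * v) = pl ys" for v
      by (rule exI[of _ "map (\<lambda>(c,k). (c * v, k)) (dl xs)"]) (simp add: pl_smult fun_eq_iff)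
    then show ?case unfolding h
      apply (intro exI[of _ "pl xs"] exI[of _ "\<lambda>x v. pl (dl xs) x * v"] conjI allI impI refl)
       apply (rule d)
      apply (rule disjI1)
      apply blast
      done
  qed
  then show ?thesis by blast
qed

definition psi :: "real \<Rightarrow> real" where
  "psi x = (if 0 < x then exp (- inverse x) else 0)"

lemma psi_pl: "psi = pl [(1,0)]"
  by (auto simp: fun_eq_iff psi_def pl_def sl_def tm_def)

lemma smooth_psi: "smooth_on S psi"
  unfolding psi_pl by (rule smooth_pl)

lemma psi_deriv: "(psi has_real_derivative (if 0 < x then inverse x ^ 2 * exp (- inverse x) else 0)) (at x)"
proof -
  have "pl (dl [(1,0)]) x = (if 0 < x then inverse x ^ 2 * exp (- inverse x) else 0)"
    by (simp add: dl_def pl_def sl_def tm_def power2_eq_square)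
  then show ?thesis using pl_deriv[of "[(1,0)]" x] psi_pl by metis
qed

lemma smooth_inverse: "smooth_on {0<..} (\<lambda>x::real. inverse x)"
proof -
  have "smooth_on {0<..} h" if "\<exists>c n. h = (\<lambda>x::real. c * inverse x ^ n)" for h
    using that
  proof (coinduction arbitrary: h rule: smooth_on.coinduct)
    case (smooth_on h)
    then obtain c n where h: "h = (\<lambda>x::real. c * inverse x ^ n)" by blast
    have d: "(h has_derivative (\<lambda>v. (- c * real n) * inverse x ^ Suc n * v)) (at x within {0<..})"
      if "x \<in> {0<..}" for x
    proof -
      have "(h has_real_derivative (c * (real n * inverse x ^ (n - 1) * (- (inverse x ^ 2))))) (at x within {0<..})"
        unfolding h using that by (auto intro!: derivative_eq_intros simp: power2_eq_square)
      moreover have "c * (real n * inverse x ^ (n - 1) * (- (inverse x ^ 2))) = (- c * real n) * inverse x ^ Suc n"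
        by (cases n) (auto simp: power2_eq_square algebra_simps)
      ultimately have "(h has_real_derivative ((- c * real n) * inverse x ^ Suc n)) (at x within {0<..})"
        by metis
      then show ?thesis by (simp only: has_field_derivative_def)
    qed
    have ex: "\<exists>c' n'. (\<lambda>x. (- c * real n) * inverse x ^ Suc n * v) = (\<lambda>x::real. c' * inverse x ^ n')" for v
      by (intro exI[of _ "- c * real n * v"] exI[of _ "Suc n"]) (simp add: fun_eq_iff algebra_simps)
    show ?case
      apply (intro exI[of _ h] exI[of _ "\<lambda>x v. (- c * real n) * inverse x ^ Suc n * v"] conjI allI impI refl)
       apply (erule d)
      apply (rule disjI1)
      using ex by blast
  qed
  from this[of "\<lambda>x. inverse x"] show ?thesis by (metis mult_1 power_one_right)
qed




lemma psi_nonneg: "0 \<le> psi x" by (simp add: psi_def)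
lemma psi_pos: "0 < x \<Longrightarrow> 0 < psi x" by (simp add: psi_def)
lemma psi_zero: "x \<le> 0 \<Longrightarrow> psi x = 0" by (simp add: psi_def)
lemma psi_strict_mono: "0 < x \<Longrightarrow> x < y \<Longrightarrow> psi x < psi y"
  by (simp add: psi_def field_simps)
lemma psi_mono: "x \<le> y \<Longrightarrow> psi x \<le> psi y"
proof -
  assume "x \<le> y"
  then consider "x \<le> 0" | "0 < x" "x < y" | "x = y" by linarith
  then show ?thesis
    by cases (auto simp: psi_zero psi_nonneg intro: less_imp_le psi_strict_mono)
qed
lemma psi_one: "psi 1 = exp (- 1)" by (simp add: psi_def)

definition psid :: "real \<Rightarrow> real" where
  "psid x = (if 0 < x then inverse x ^ 2 * exp (- inverse x) else 0)"

lemma psid_pl: "psid = pl (dl [(1,0)])"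
  by (auto simp: fun_eq_iff psid_def dl_def pl_def sl_def tm_def power2_eq_square)

lemma psi_DERIV: "(psi has_real_derivative psid x) (at x)"
  using psi_deriv by (simp add: psid_def)

lemma psid_DERIV: "(psid has_real_derivative pl (dl (dl [(1,0)])) x) (at x)"
  unfolding psid_pl by (rule pl_deriv)

lemma psid_pos: "0 < x \<Longrightarrow> 0 < psid x" by (simp add: psid_def)
lemma psid_one: "psid 1 = exp (- 1)" by (simp add: psid_def)

lemma isCont_psi: "isCont psi x" using psi_DERIV by (rule DERIV_isCont)
lemma isCont_psid: "isCont psid x" using psid_DERIV by (rule DERIV_isCont)

lemma smooth1_deriv:
  fixes g :: "real \<Rightarrow> real"
  assumes "smooth_on UNIV g"
  shows "(\<forall>y. (g has_real_derivative deriv g y) (at y)) \<and> smooth_on UNIV (deriv g)"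
proof -
  obtain g' where g1: "\<forall>y\<in>UNIV. (g has_derivative g' y) (at y within UNIV)"
    and g2: "\<forall>v. smooth_on UNIV (\<lambda>y. g' y v)"
    using smooth_onD[OF assms] by blast
  have d: "(g has_real_derivative g' y 1) (at y)" for y
  proof -
    have hd: "(g has_derivative g' y) (at y)" using g1 by simp
    have bl: "bounded_linear (g' y)" using hd by (rule has_derivative_bounded_linear)
    have "g' y v = g' y 1 * v" for v
      using real_lin_scale[OF bl, of v] by (simp only: mult.commute)
    then have "g' y = (\<lambda>v. g' y 1 * v)" by (rule ext)
    then show ?thesis using hd by (simp add: has_field_derivative_def)
  qed
  have "deriv g y = g' y 1" for y using d[of y] by (rule DERIV_imp_deriv)
  then have "deriv g = (\<lambda>y. g' y 1)" by (rule ext)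
  then show ?thesis using d g2 by auto
qed

lemma smooth_isCont: "smooth_on UNIV (g::real \<Rightarrow> real) \<Longrightarrow> isCont g x"
  using smooth1_deriv DERIV_isCont by blast

definition stp :: "real \<Rightarrow> real" where
  "stp z = psi z * inverse (psi z + psi (1 - z))"

lemma psi_sum_pos: "0 < psi z + psi (1 - z)"
proof (cases "0 < z")
  case True then show ?thesis using psi_pos[of z] psi_nonneg[of "1-z"] by linarith
next
  case False then show ?thesis using psi_pos[of "1-z"] psi_nonneg[of z] by linarith
qed

lemma smooth_stp: "smooth_on UNIV stp"
proof -
  have "smooth_on UNIV (\<lambda>z. inverse (psi z + psi (1 - z)))"
    apply (rule smooth_compose[OF smooth_inverse open_greaterThan])
    using psi_sum_pos apply simp
    apply (intro smooth_add smooth_psi smooth_compose[OF smooth_psi open_UNIV] smooth_minus smooth_const)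
    apply simp
    apply (rule smooth_linear, rule bounded_linear_ident)
    done
  then show ?thesis unfolding stp_def
    by (intro smooth_mult smooth_psi)
qed

lemma stp_zero: "z \<le> 0 \<Longrightarrow> stp z = 0" by (simp add: stp_def psi_zero)
lemma stp_one: "1 \<le> z \<Longrightarrow> stp z = 1"
  using psi_sum_pos[of z] by (simp add: stp_def psi_zero field_simps)
lemma stp_nonneg: "0 \<le> stp z"
  using psi_sum_pos[of z] psi_nonneg[of z] by (simp add: stp_def)
lemma stp_le1: "stp z \<le> 1"
  using psi_sum_pos[of z] psi_nonneg[of z] psi_nonneg[of "1-z"] by (simp add: stp_def field_simps)

definition stpd :: "real \<Rightarrow> real" where "stpd = deriv stp"

lemma stp_DERIV: "(stp has_real_derivative stpd z) (at z)"
  using smooth1_deriv[OF smooth_stp] by (simp add: stpd_def)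

lemma isCont_stpd: "isCont stpd z"
  using smooth1_deriv[OF smooth_stp] smooth_isCont by (simp add: stpd_def)

lemma stpd_out: "z < 0 \<or> 1 < z \<Longrightarrow> stpd z = 0"
proof -
  assume a: "z < 0 \<or> 1 < z"
  have "((\<lambda>_. if z < 0 then 0 else 1) has_real_derivative 0) (at z)" by simp
  then have "(stp has_real_derivative 0) (at z)"
  proof (rule has_field_derivative_transform_within_open[of _ _ _ "if z < 0 then {..<0} else {1<..}"])
    show "open (if z < 0 then {..<0::real} else {1<..})" by auto
    show "z \<in> (if z < 0 then {..<0} else {1<..})" using a by auto
    show "(if z < 0 then 0 else 1) = stp x" if "x \<in> (if z < 0 then {..<0} else {1<..})" for x
      using that a by (auto split: if_splits simp: stp_zero stp_one)
  qed
  then show ?thesis using stp_DERIV[of z] DERIV_unique by blast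
qed

lemma stpd_bound: "\<exists>K. \<forall>z. \<bar>z * stpd z\<bar> \<le> K"
proof -
  have "compact (stpd ` {0..1})"
    by (rule compact_continuous_image) (auto intro: continuous_at_imp_continuous_on isCont_stpd)
  then obtain K where K: "\<forall>y\<in>stpd ` {0..1}. norm y \<le> K"
    using compact_imp_bounded bounded_iff by metis
  have "\<bar>z * stpd z\<bar> \<le> max K 0" for z
  proof (cases "0 \<le> z \<and> z \<le> 1")
    case True
    then have "\<bar>stpd z\<bar> \<le> K" using K by auto
    moreover have "\<bar>z\<bar> \<le> 1" using True by auto
    ultimately have "\<bar>z\<bar> * \<bar>stpd z\<bar> \<le> 1 * K"
      by (intro mult_mono) auto
    then show ?thesis by (simp add: abs_mult)
  next
    case False then show ?thesis using stpd_out[of z] by auto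
  qed
  then show ?thesis by blast
qed

definition lam :: "real \<Rightarrow> real \<Rightarrow> real" where
  "lam d y = y * stp (2 * y / d)"

definition lamd :: "real \<Rightarrow> real \<Rightarrow> real" where
  "lamd d y = stp (2 * y / d) + (2 * y / d) * stpd (2 * y / d)"

lemma lam_DERIV: "0 < d \<Longrightarrow> (lam d has_real_derivative lamd d y) (at y)"
proof -
  assume d: "0 < d"
  have "((\<lambda>y. stp (2 * y / d)) has_real_derivative stpd (2 * y / d) * (2 / d)) (at y)"
    by (rule DERIV_chain2[OF stp_DERIV]) (use d in \<open>auto intro!: derivative_eq_intros\<close>)
  then have D: "((\<lambda>y. y * stp (2 * y / d)) has_real_derivative (1 * stp (2*y/d) + stpd (2*y/d) * (2/d) * y)) (at y)"
    by (rule DERIV_mult[OF DERIV_ident])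
  moreover have "1 * stp (2*y/d) + stpd (2*y/d) * (2/d) * y = lamd d y" by (simp add: lamd_def algebra_simps)
  moreover have "(\<lambda>y. y * stp (2 * y / d)) = lam d" by (simp add: lam_def fun_eq_iff)
  ultimately show ?thesis by metis
qed

lemma lam_lin: "0 < d \<Longrightarrow> d / 2 \<le> y \<Longrightarrow> lam d y = y"
proof -
  assume "0 < d" "d / 2 \<le> y"
  then have "1 \<le> 2 * y / d" by (simp add: field_simps)
  then show ?thesis by (simp add: lam_def stp_one)
qed
lemma lam_neg: "0 < d \<Longrightarrow> y \<le> 0 \<Longrightarrow> lam d y = 0"
  by (simp add: lam_def stp_zero divide_nonpos_pos)
lemma lam_nonneg: "0 < d \<Longrightarrow> 0 \<le> lam d y"
proof (cases "y \<le> 0")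
  case True
  assume "0 < d"
  then show ?thesis using lam_neg[of d y] True by simp
next
  case False
  then show ?thesis by (simp add: lam_def stp_nonneg)
qed
lemma lam_abs: "\<bar>lam d y\<bar> \<le> \<bar>y\<bar>"
  using stp_nonneg[of "2*y/d"] stp_le1[of "2*y/d"]
  by (auto simp: lam_def abs_mult intro!: mult_left_le)

lemma lamd_bound: "\<exists>K. \<forall>d y. \<bar>lamd d y\<bar> \<le> K"
proof -
  obtain K where K: "\<forall>z. \<bar>z * stpd z\<bar> \<le> K" using stpd_bound by blast
  have "\<bar>lamd d y\<bar> \<le> 1 + K" for d y
  proof -
    have "\<bar>lamd d y\<bar> \<le> \<bar>stp (2 * y / d)\<bar> + \<bar>(2 * y / d) * stpd (2 * y / d)\<bar>"
      unfolding lamd_def by (rule abs_triangle_ineq)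
    also have "\<dots> \<le> 1 + K" using K[rule_format, of "2 * y / d"] stp_nonneg stp_le1 by (intro add_mono) auto
    finally show ?thesis .
  qed
  then show ?thesis by blast
qed

definition Cf :: "real \<Rightarrow> real \<Rightarrow> real" where
  "Cf d u = lam d (1 - (1 - d) * u)"

definition bet :: "real \<Rightarrow> real" where
  "bet x = exp 1 * psi (1 - x\<^sup>2)"

definition bd :: "real \<Rightarrow> real" where
  "bd x = exp 1 * (psid (1 - x\<^sup>2) * (- 2 * x))"

lemma bet_DERIV: "(bet has_real_derivative bd x) (at x)"
proof -
  have "((\<lambda>x. psi (1 - x\<^sup>2)) has_real_derivative psid (1 - x\<^sup>2) * (- 2 * x)) (at x)"
    by (rule DERIV_chain2[OF psi_DERIV]) (auto intro!: derivative_eq_intros)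
  then show ?thesis unfolding bet_def bd_def by (intro DERIV_cmult)
qed

definition phi :: "real \<Rightarrow> real \<Rightarrow> real" where
  "phi d t = 1 + t * (d + (1 - d) * exp 1 * psi (- t))"

definition Fn :: "real \<Rightarrow> real \<Rightarrow> real \<times> real \<Rightarrow> real" where
  "Fn d t p = ((snd p)\<^sup>2 - 1 + phi d t * bet (fst p) * Cf d ((snd p)\<^sup>2)) / 4"

lemma smooth_uminus: "smooth_on S f \<Longrightarrow> smooth_on S (\<lambda>x. - f x)"
  using smooth_cmult[of S f "-1"] by simp

lemma smooth_lam: "smooth_on UNIV (lam d)"
proof -
  have a: "smooth_on UNIV (\<lambda>y::real. y)" by (rule smooth_linear, rule bounded_linear_ident)
  have "(\<lambda>y::real. 2 * y / d) = (\<lambda>y. (2 / d) * y)" by (auto simp: fun_eq_iff)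
  then have b: "smooth_on UNIV (\<lambda>y::real. 2 * y / d)"
    using smooth_linear[OF bounded_linear_mult_right[of "2/d"]] by metis
  have "smooth_on UNIV (\<lambda>y. y * stp (2 * y / d))"
    by (rule smooth_mult[OF a smooth_compose[OF smooth_stp open_UNIV _ b]]) simp
  then show ?thesis by (simp add: lam_def[abs_def])
qed

lemma smooth_Fn: "smooth_on UNIV (\<lambda>(t, x). Fn d t x)"
proof -
  have L1: "smooth_on UNIV (\<lambda>z::real \<times> real \<times> real. fst z)"
    by (rule smooth_linear) (rule bounded_linear_fst)
  have L2: "smooth_on UNIV (\<lambda>z::real \<times> real \<times> real. fst (snd z))"
    by (rule smooth_linear) (auto intro!: bounded_linear_intros)
  have L3: "smooth_on UNIV (\<lambda>z::real \<times> real \<times> real. snd (snd z))"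
    by (rule smooth_linear) (auto intro!: bounded_linear_intros)
  have e: "(\<lambda>(t, x). Fn d t x) = (\<lambda>z::real \<times> real \<times> real. (1/4) * ((snd (snd z))^2 - 1 +
      (1 + fst z * (d + (1 - d) * exp 1 * psi (- fst z))) * (exp 1 * psi (1 - (fst (snd z))^2)) *
      lam d (1 - (1 - d) * (snd (snd z))^2)))"
    by (auto simp: fun_eq_iff Fn_def phi_def bet_def Cf_def)
  show ?thesis unfolding e
    by (intro smooth_cmult smooth_add smooth_minus smooth_uminus smooth_mult smooth_power smooth_const L1 L2 L3
        smooth_compose[OF smooth_psi open_UNIV] smooth_compose[OF smooth_lam open_UNIV] UNIV_I)
qed




lemma Cf_lin:
  assumes "0 < d" "(1 - d) * u < 1 - d / 2"
  shows "Cf d u = 1 - (1 - d) * u"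
  using assms by (simp add: Cf_def lam_lin)

lemma Cf_nonneg: "0 < d \<Longrightarrow> 0 \<le> Cf d u"
  by (simp add: Cf_def lam_nonneg)

lemma Cf_out:
  assumes "0 < (d::real)" "d \<le> 1/10" "(1 + 2 * d)\<^sup>2 < u"
  shows "Cf d u = 0"
proof -
  have "(1 - d) * (1 + 2 * d)\<^sup>2 \<le> (1 - d) * u" using assms by (intro mult_left_mono) auto
  moreover have "1 \<le> (1 - d) * (1 + 2 * d)\<^sup>2"
  proof -
    have "(1 - d) * (1 + 2 * d)\<^sup>2 = 1 + d * (3 - 4 * d\<^sup>2)" by (simp add: power2_eq_square algebra_simps)
    moreover have "d * d \<le> (1/10) * (1/10)" using assms by (intro mult_mono) auto
    then have "0 \<le> 3 - 4 * d\<^sup>2" by (simp add: power2_eq_square)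
    then have "0 \<le> d * (3 - 4 * d\<^sup>2)" using assms by simp
    ultimately show ?thesis by linarith
  qed
  ultimately have "1 - (1 - d) * u \<le> 0" by linarith
  then show ?thesis using assms by (simp add: Cf_def lam_neg)
qed

lemma Cf_abs:
  assumes "0 < (d::real)" "d \<le> 1/10" "0 \<le> u"
  shows "\<bar>Cf d u\<bar> \<le> 1 + u"
proof -
  have "\<bar>Cf d u\<bar> \<le> \<bar>1 - (1 - d) * u\<bar>" unfolding Cf_def by (rule lam_abs)
  also have "\<dots> \<le> 1 + u"
  proof -
    have "0 \<le> d * u" using assms by simp
    then have "(1 - d) * u \<le> u" by (simp add: algebra_simps)
    moreover have "0 \<le> (1 - d) * u" using assms by simp
    ultimately have "0 \<le> (1 - d) * u" "(1 - d) * u \<le> u" by auto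
    then show ?thesis by linarith
  qed
  finally show ?thesis .
qed

lemma Cf_zero: "0 < d \<Longrightarrow> d \<le> 1/10 \<Longrightarrow> Cf d 0 = 1"
  by (simp add: Cf_lin)

lemma bet_nonneg: "0 \<le> bet x" by (simp add: bet_def psi_nonneg)

lemma bet_le1: "bet x \<le> 1"
proof -
  have "psi (1 - x\<^sup>2) \<le> psi 1" by (rule psi_mono) simp
  then have "exp 1 * psi (1 - x\<^sup>2) \<le> exp 1 * exp (-1)" by (simp add: psi_one)
  then show ?thesis by (simp add: bet_def exp_minus)
qed

lemma bet_zero: "1 \<le> x\<^sup>2 \<Longrightarrow> bet x = 0" by (simp add: bet_def psi_zero)

lemma bet_at0: "bet 0 = 1" by (simp add: bet_def psi_one exp_minus)

lemma bet_lt1: "x \<noteq> 0 \<Longrightarrow> bet x < 1"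
proof -
  assume "x \<noteq> 0"
  then have x2: "0 < x\<^sup>2" by simp
  show ?thesis
  proof (cases "x\<^sup>2 < 1")
    case True
    then have "psi (1 - x\<^sup>2) < psi 1" using x2 by (intro psi_strict_mono) auto
    then have "exp 1 * psi (1 - x\<^sup>2) < exp 1 * exp (-1)" by (simp add: psi_one)
    then show ?thesis by (simp add: bet_def exp_minus)
  next
    case False then show ?thesis by (simp add: bet_zero)
  qed
qed

lemma bet_formula: "x\<^sup>2 < 1 \<Longrightarrow> bet x = exp (1 - inverse (1 - x\<^sup>2))"
proof -
  assume "x\<^sup>2 < 1"
  then have "psi (1 - x\<^sup>2) = exp (- inverse (1 - x\<^sup>2))" by (simp add: psi_def)
  then have "bet x = exp 1 * exp (- inverse (1 - x\<^sup>2))" by (simp add: bet_def)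
  also have "\<dots> = exp (1 - inverse (1 - x\<^sup>2))" by (simp add: exp_diff exp_minus divide_inverse)
  finally show ?thesis .
qed

lemma bd_at0: "bd 0 = 0" by (simp add: bd_def)

lemma bd_nonzero: "x \<noteq> 0 \<Longrightarrow> x\<^sup>2 < 1 \<Longrightarrow> bd x \<noteq> 0"
  using psid_pos[of "1 - x\<^sup>2"] by (simp add: bd_def)

lemma phi_m1: "phi d (-1) = 0"
proof -
  have e: "exp 1 * psi 1 = 1" by (simp add: psi_one exp_minus)
  have "(1 - d) * exp 1 * psi 1 = (1 - d) * (exp 1 * psi 1)" by (simp only: mult.assoc)
  also have "\<dots> = 1 - d" by (simp only: e mult_1_right)
  finally have f: "(1 - d) * exp 1 * psi 1 = 1 - d" .
  have "phi d (-1) = 1 - (d + (1 - d) * exp 1 * psi 1)" by (simp add: phi_def)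
  then show ?thesis using f by simp
qed

lemma phi_0: "phi d 0 = 1" by (simp add: phi_def)

lemma phi_pos_t: "0 < t \<Longrightarrow> phi d t = 1 + t * d"
  by (simp add: phi_def psi_zero)

lemma phi_neg_t:
  assumes "0 < (d::real)" "d \<le> 1/10" "-1 \<le> t" "t < 0"
  shows "0 \<le> phi d t \<and> phi d t < 1"
proof -
  define w where "w = d + (1 - d) * exp 1 * psi (- t)"
  have w0: "0 < w" unfolding w_def using assms psi_nonneg[of "-t"] by (simp add: add_pos_nonneg)
  have "psi (- t) \<le> psi 1" using assms by (intro psi_mono) simp
  then have "exp 1 * psi (- t) \<le> 1" by (simp add: psi_one exp_minus field_simps)
  then have "(1 - d) * (exp 1 * psi (- t)) \<le> (1 - d) * 1" using assms by (intro mult_left_mono) auto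
  then have w1: "w \<le> 1" unfolding w_def by (simp add: mult.assoc)
  have "t * w < 0" using w0 assms by (simp add: mult_neg_pos)
  moreover have "(-1) * w \<le> t * w" using assms w0 by (intro mult_right_mono) auto
  moreover have "phi d t = 1 + t * w" by (simp add: phi_def w_def)
  ultimately show ?thesis using w1 by linarith
qed

lemma phi_range:
  assumes "0 < (d::real)" "d \<le> 1/10" "-1 \<le> t" "t \<le> 1"
  shows "0 \<le> phi d t \<and> phi d t \<le> 1 + d"
proof -
  consider "t < 0" | "t = 0" | "0 < t" by linarith
  then show ?thesis
  proof cases
    case 1 then show ?thesis using phi_neg_t[OF assms(1,2,3) 1] assms by linarith
  next
    case 2 then show ?thesis using assms by (simp add: phi_0)
  next
    case 3
    have "t * d \<le> 1 * d" using assms 3 by (intro mult_right_mono) auto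
    then show ?thesis using 3 assms by (simp add: phi_pos_t)
  qed
qed

definition U :: "real \<Rightarrow> real \<Rightarrow> real" where
  "U d B = (1 - B) / (1 - (1 - d) * B)"

lemma den_pos:
  assumes "0 < (d::real)" "d \<le> 1/10" "0 \<le> B" "B \<le> 1 + d"
  shows "0 < 1 - (1 - d) * B"
proof -
  have "(1 - d) * B \<le> (1 - d) * (1 + d)" using assms by (intro mult_left_mono) auto
  moreover have "(1 - d) * (1 + d) < 1" using assms by (simp add: algebra_simps)
  ultimately show ?thesis by linarith
qed

lemma U_range:
  assumes "0 < (d::real)" "d \<le> 1/10" "0 \<le> B" "B \<le> 1"
  shows "0 \<le> U d B \<and> U d B \<le> 1"
proof -
  have D: "0 < 1 - (1 - d) * B" using den_pos[OF assms(1,2,3)] assms by linarith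
  have "0 \<le> d * B" using assms by simp
  then have "(1 - d) * B \<le> B" by (simp add: algebra_simps)
  then show ?thesis using D assms by (auto simp: U_def divide_le_eq_1)
qed

lemma U_zero_iff:
  assumes "0 < (d::real)" "d \<le> 1/10" "0 \<le> B" "B \<le> 1 + d"
  shows "U d B = 0 \<longleftrightarrow> B = 1"
  using den_pos[OF assms] by (auto simp: U_def)

lemma U_0: "U d 0 = 1" by (simp add: U_def)

lemma zero_iff:
  assumes "0 < (d::real)" "d \<le> 1/10" "0 \<le> B" "B \<le> 1 + d"
  shows "s\<^sup>2 - 1 + B * Cf d (s\<^sup>2) = 0 \<longleftrightarrow> B \<le> 1 \<and> s\<^sup>2 = U d B"
proof -
  have D: "0 < 1 - (1 - d) * B" by (rule den_pos[OF assms])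
  show ?thesis
  proof (cases "s\<^sup>2 \<le> 1")
    case True
    have "(1 - d) * s\<^sup>2 \<le> (1 - d) * 1" using True assms by (intro mult_left_mono) auto
    then have "(1 - d) * s\<^sup>2 \<le> 1 - d" by simp
    then have "(1 - d) * s\<^sup>2 < 1 - d / 2" using assms by linarith
    then have C: "Cf d (s\<^sup>2) = 1 - (1 - d) * s\<^sup>2" using assms by (intro Cf_lin) auto
    have "s\<^sup>2 - 1 + B * Cf d (s\<^sup>2) = s\<^sup>2 * (1 - (1 - d) * B) - (1 - B)"
      unfolding C by (simp add: algebra_simps)
    then have "s\<^sup>2 - 1 + B * Cf d (s\<^sup>2) = 0 \<longleftrightarrow> s\<^sup>2 = U d B"
      using D by (auto simp: U_def field_simps)
    moreover have "s\<^sup>2 = U d B \<Longrightarrow> B \<le> 1"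
    proof -
      assume "s\<^sup>2 = U d B"
      then have "s\<^sup>2 * (1 - (1 - d) * B) = 1 - B" using D by (simp add: U_def field_simps)
      moreover have "0 \<le> s\<^sup>2 * (1 - (1 - d) * B)" using D by simp
      ultimately show "B \<le> 1" by linarith
    qed
    ultimately show ?thesis by blast
  next
    case False
    have "0 \<le> B * Cf d (s\<^sup>2)" using assms Cf_nonneg by auto
    then have "s\<^sup>2 - 1 + B * Cf d (s\<^sup>2) \<noteq> 0" using False by linarith
    moreover have "B \<le> 1 \<Longrightarrow> U d B \<le> 1" using U_range assms by blast
    ultimately show ?thesis using False by auto
  qed
qed

definition Bv :: "real \<Rightarrow> real \<Rightarrow> real \<Rightarrow> real" where
  "Bv d t x = phi d t * bet x"

lemma Bv_range:
  assumes "0 < (d::real)" "d \<le> 1/10" "-1 \<le> t" "t \<le> 1"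
  shows "0 \<le> Bv d t x \<and> Bv d t x \<le> 1 + d"
proof -
  have p: "0 \<le> phi d t" "phi d t \<le> 1 + d" using phi_range[OF assms] by auto
  have "phi d t * bet x \<le> (1 + d) * 1" using p bet_nonneg bet_le1 by (intro mult_mono) auto
  then show ?thesis using p bet_nonneg by (simp add: Bv_def)
qed

definition r :: "real \<Rightarrow> real \<Rightarrow> real \<Rightarrow> real" where
  "r d t x = sqrt (U d (Bv d t x))"

lemma Fn_eq: "Fn d t (x1, x3) = (x3\<^sup>2 - 1 + Bv d t x1 * Cf d (x3\<^sup>2)) / 4"
  by (simp add: Fn_def Bv_def)

lemma zeroset_eq:
  assumes "0 < (d::real)" "d \<le> 1/10" "-1 \<le> t" "t \<le> 1"
  shows "zeroset (Fn d t) = {(x1, x3). -2 \<le> x1 \<and> x1 \<le> 2 \<and> Bv d t x1 \<le> 1 \<and> (x3 = r d t x1 \<or> x3 = - r d t x1)}"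
proof -
  have "(x1, x3) \<in> zeroset (Fn d t) \<longleftrightarrow> -2 \<le> x1 \<and> x1 \<le> 2 \<and> Bv d t x1 \<le> 1 \<and> (x3 = r d t x1 \<or> x3 = - r d t x1)"
    for x1 x3
  proof -
    have B: "0 \<le> Bv d t x1" "Bv d t x1 \<le> 1 + d" using Bv_range[OF assms] by auto
    have "Fn d t (x1, x3) = 0 \<longleftrightarrow> Bv d t x1 \<le> 1 \<and> x3\<^sup>2 = U d (Bv d t x1)"
      using zero_iff[OF assms(1,2) B] by (simp add: Fn_eq)
    moreover have "Bv d t x1 \<le> 1 \<Longrightarrow> x3\<^sup>2 = U d (Bv d t x1) \<longleftrightarrow> (x3 = r d t x1 \<or> x3 = - r d t x1)"
    proof -
      assume "Bv d t x1 \<le> 1"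
      then have u: "0 \<le> U d (Bv d t x1)" "U d (Bv d t x1) \<le> 1" using U_range[OF assms(1,2) B(1)] by auto
      show ?thesis
      proof
        assume "x3\<^sup>2 = U d (Bv d t x1)"
        then have "sqrt (x3\<^sup>2) = r d t x1" by (simp add: r_def)
        then show "x3 = r d t x1 \<or> x3 = - r d t x1" by (auto simp: abs_if split: if_splits)
      next
        assume "x3 = r d t x1 \<or> x3 = - r d t x1"
        then show "x3\<^sup>2 = U d (Bv d t x1)" using u by (auto simp: r_def)
      qed
    qed
    moreover have "Bv d t x1 \<le> 1 \<Longrightarrow> x3\<^sup>2 = U d (Bv d t x1) \<Longrightarrow> -2 \<le> x3 \<and> x3 \<le> 2"
    proof -
      assume "Bv d t x1 \<le> 1" "x3\<^sup>2 = U d (Bv d t x1)"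
      then have "x3\<^sup>2 \<le> 1" using U_range[OF assms(1,2) B(1)] by auto
      then have "\<bar>x3\<bar> \<le> 1" by (simp add: abs_square_le_1)
      then show ?thesis by auto
    qed
    ultimately show ?thesis by (auto simp: zeroset_def sq_def)
  qed
  then show ?thesis by auto
qed

lemma r_nonneg:
  assumes "0 < (d::real)" "d \<le> 1/10" "-1 \<le> t" "t \<le> 1" "Bv d t x \<le> 1"
  shows "0 \<le> r d t x"
proof -
  have "0 \<le> Bv d t x" using Bv_range[OF assms(1-4)] by auto
  then show ?thesis using U_range[OF assms(1,2) _ assms(5)] by (simp add: r_def)
qed

lemma r_zero_iff:
  assumes "0 < (d::real)" "d \<le> 1/10" "-1 \<le> t" "t \<le> 1"
  shows "r d t x = 0 \<longleftrightarrow> Bv d t x = 1"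
  using U_zero_iff[OF assms(1,2)] Bv_range[OF assms] by (simp add: r_def)

lemma r_le1:
  assumes "0 < (d::real)" "d \<le> 1/10" "-1 \<le> t" "t \<le> 1" "Bv d t x \<le> 1"
  shows "r d t x \<le> 1"
proof -
  have "0 \<le> Bv d t x" using Bv_range[OF assms(1-4)] by auto
  then show ?thesis using U_range[OF assms(1,2) _ assms(5)] by (simp add: r_def)
qed

lemma r_edge:
  assumes "1 \<le> x\<^sup>2"
  shows "r d t x = 1"
  using assms by (simp add: r_def Bv_def bet_zero U_0)

lemma r_cont:
  assumes "0 < (d::real)" "d \<le> 1/10" "-1 \<le> t" "t \<le> 1"
  shows "continuous_on S (r d t)"
proof -
  have cb: "continuous_on S bet"
    by (intro continuous_at_imp_continuous_on ballI DERIV_isCont[OF bet_DERIV])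
  have nz: "1 - (1 - d) * (phi d t * bet x) \<noteq> 0" for x
    using den_pos[OF assms(1,2), of "phi d t * bet x"] Bv_range[OF assms, of x] by (simp add: Bv_def)
  have "continuous_on S (\<lambda>x. sqrt ((1 - phi d t * bet x) / (1 - (1 - d) * (phi d t * bet x))))"
    using nz by (intro continuous_intros cb) auto
  then show ?thesis by (simp add: r_def[abs_def] U_def Bv_def)
qed

definition gp :: "(real \<Rightarrow> real) \<Rightarrow> real \<Rightarrow> real \<Rightarrow> real \<Rightarrow> real \<times> real" where
  "gp f a b = (\<lambda>s. (linepath a b s, f (linepath a b s)))"

lemma gp_image: "path_image (gp f a b) = (\<lambda>x. (x, f x)) ` closed_segment a b"
proof -
  have "path_image (gp f a b) = (\<lambda>x. (x, f x)) ` (linepath a b ` {0..1})"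
    by (auto simp: path_image_def gp_def image_image)
  also have "linepath a b ` {0..1} = closed_segment a b"
    using path_image_linepath[of a b] by (simp add: path_image_def)
  finally show ?thesis .
qed

lemma gp_start: "pathstart (gp f a b) = (a, f a)" by (simp add: gp_def pathstart_def linepath_def)
lemma gp_finish: "pathfinish (gp f a b) = (b, f b)" by (simp add: gp_def pathfinish_def linepath_def)

lemma gp_arc:
  assumes "a \<noteq> b" "continuous_on (closed_segment a b) f"
  shows "arc (gp f a b)"
proof -
  have al: "arc (linepath a b)" using assms(1) by (rule arc_linepath)
  have cl: "continuous_on {0..1} (linepath a b)" using al by (simp add: arc_def path_def)
  have sub: "linepath a b ` {0..1} \<subseteq> closed_segment a b"
    using path_image_linepath[of a b] by (simp add: path_image_def)
  have "continuous_on {0..1} (\<lambda>s. f (linepath a b s))"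
    by (rule continuous_on_compose2[OF assms(2) cl sub])
  then have "path (gp f a b)" unfolding path_def gp_def
    by (intro continuous_on_Pair cl)
  moreover have "inj_on (gp f a b) {0..1}"
    using al by (auto simp: arc_def inj_on_def gp_def)
  ultimately show ?thesis by (simp add: arc_def)
qed

lemma convex_sq: "convex (sq a b)"
  by (simp add: sq_def convex_Times)




lemma d1_Fn:
  "d1 (Fn d t) (x1, x3) = phi d t * bd x1 * Cf d (x3\<^sup>2) / 4"
proof -
  define c where "c = phi d t * Cf d (x3\<^sup>2) / 4"
  have e: "(\<lambda>s. Fn d t (s, x3)) = (\<lambda>s. (x3\<^sup>2 - 1) / 4 + c * bet s)"
    by (auto simp: fun_eq_iff Fn_def c_def field_simps)
  have "((\<lambda>s. (x3\<^sup>2 - 1) / 4 + c * bet s) has_real_derivative 0 + c * bd x1) (at x1)"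
    by (intro DERIV_add DERIV_const DERIV_cmult bet_DERIV)
  then have "deriv (\<lambda>s. Fn d t (s, x3)) x1 = c * bd x1"
    unfolding e by (simp add: DERIV_imp_deriv)
  then show ?thesis by (simp add: d1_def c_def)
qed

lemma d2_Fn_gen:
  assumes "0 < d"
  shows "d2 (Fn d t) (x1, x3) = (2 * x3 + Bv d t x1 * (lamd d (1 - (1 - d) * x3\<^sup>2) * (- (1 - d) * (2 * x3)))) / 4"
proof -
  define B where "B = Bv d t x1"
  have e: "(\<lambda>s. Fn d t (x1, s)) = (\<lambda>s. (s\<^sup>2 - 1 + B * lam d (1 - (1 - d) * s\<^sup>2)) / 4)"
    by (auto simp: fun_eq_iff Fn_def B_def Bv_def Cf_def)
  have l: "((\<lambda>s. lam d (1 - (1 - d) * s\<^sup>2)) has_real_derivative lamd d (1 - (1 - d) * x3\<^sup>2) * (- (1 - d) * (2 * x3))) (at x3)"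
    by (rule DERIV_chain2[OF lam_DERIV[OF assms]]) (auto intro!: derivative_eq_intros simp: algebra_simps)
  have "((\<lambda>s. (s\<^sup>2 - 1 + B * lam d (1 - (1 - d) * s\<^sup>2)) / 4) has_real_derivative
      (2 * x3 + B * (lamd d (1 - (1 - d) * x3\<^sup>2) * (- (1 - d) * (2 * x3)))) / 4) (at x3)"
    by (auto intro!: derivative_eq_intros l)
  then have "deriv (\<lambda>s. Fn d t (x1, s)) x3 = (2 * x3 + B * (lamd d (1 - (1 - d) * x3\<^sup>2) * (- (1 - d) * (2 * x3)))) / 4"
    unfolding e by (rule DERIV_imp_deriv)
  then show ?thesis by (simp only: d2_def fst_conv snd_conv B_def)
qed

lemma lamd_one:
  assumes "0 < d" "d / 2 < y"
  shows "lamd d y = 1"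
proof -
  have "1 < 2 * y / d" using assms by (simp add: field_simps)
  then show ?thesis using stp_one[of "2 * y / d"] stpd_out[of "2 * y / d"] by (simp add: lamd_def)
qed

lemma d2_Fn_lin:
  assumes "0 < (d::real)" "d \<le> 1/10" "x3\<^sup>2 \<le> 1"
  shows "d2 (Fn d t) (x1, x3) = x3 * (1 - (1 - d) * Bv d t x1) / 2"
proof -
  have "(1 - d) * x3\<^sup>2 \<le> (1 - d) * 1" using assms by (intro mult_left_mono) auto
  then have "(1 - d) * x3\<^sup>2 \<le> 1 - d" by simp
  then have "d / 2 < 1 - (1 - d) * x3\<^sup>2" using assms by linarith
  then have l1: "lamd d (1 - (1 - d) * x3\<^sup>2) = 1" using assms by (intro lamd_one) auto
  show ?thesis unfolding d2_Fn_gen[OF assms(1)] l1 by (simp add: field_simps)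
qed

lemma order_one_Fn:
  assumes "0 < (d::real)" "d \<le> 1/10" "-1 \<le> t" "t \<le> 1"
    and p: "(x1, x3) \<in> zeroset (Fn d t)" and nz: "x1 \<noteq> 0 \<or> x3 \<noteq> 0"
  shows "order_one (Fn d t) (x1, x3)"
proof -
  have F0: "Fn d t (x1, x3) = 0" using p by (simp add: zeroset_def)
  from p have Bl: "Bv d t x1 \<le> 1" and x3r: "x3 = r d t x1 \<or> x3 = - r d t x1"
    using zeroset_eq[OF assms(1-4)] by auto
  have B0: "0 \<le> Bv d t x1" using Bv_range[OF assms(1-4)] by auto
  have r1: "r d t x1 \<le> 1" "0 \<le> r d t x1" using r_le1[OF assms(1-4) Bl] r_nonneg[OF assms(1-4) Bl] by auto
  then have x3sq: "x3\<^sup>2 \<le> 1" using x3r by (auto simp: abs_square_le_1)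
  show ?thesis
  proof (cases "x3 = 0")
    case False
    have D: "0 < 1 - (1 - d) * Bv d t x1" using den_pos[OF assms(1,2) B0] Bl assms by linarith
    have "d2 (Fn d t) (x1, x3) = x3 * (1 - (1 - d) * Bv d t x1) / 2"
      by (rule d2_Fn_lin[OF assms(1,2) x3sq])
    moreover have "x3 * (1 - (1 - d) * Bv d t x1) / 2 \<noteq> 0" using False D by simp
    ultimately have "d2 (Fn d t) (x1, x3) \<noteq> 0" by metis
    then show ?thesis using F0 by (simp add: order_one_def)
  next
    case True
    then have "r d t x1 = 0" using x3r by auto
    then have B1: "Bv d t x1 = 1" using r_zero_iff[OF assms(1-4)] by simp
    then have "phi d t \<noteq> 0" "bet x1 \<noteq> 0" by (auto simp: Bv_def)
    have x1: "x1 \<noteq> 0" using True nz by simp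
    have "x1\<^sup>2 < 1"
    proof (rule ccontr)
      assume "\<not> x1\<^sup>2 < 1"
      then have "bet x1 = 0" by (intro bet_zero) simp
      then show False using \<open>bet x1 \<noteq> 0\<close> by simp
    qed
    then have "bd x1 \<noteq> 0" using x1 by (rule bd_nonzero[rotated])
    then have "d1 (Fn d t) (x1, x3) \<noteq> 0"
      using \<open>phi d t \<noteq> 0\<close> True Cf_zero[OF assms(1,2)] by (simp add: d1_Fn)
    then show ?thesis using F0 by (simp add: order_one_def)
  qed
qed

lemma bd_DERIV0: "(bd has_real_derivative -2) (at 0)"
proof -
  have a: "((\<lambda>s. psid (1 - s\<^sup>2)) has_real_derivative pl (dl (dl [(1,0)])) (1 - 0\<^sup>2) * (- (2 * 0))) (at 0)"
    by (rule DERIV_chain2[OF psid_DERIV]) (auto intro!: derivative_eq_intros)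
  have b: "((\<lambda>s. - 2 * s) has_real_derivative -2) (at 0)"
    by (auto intro!: derivative_eq_intros)
  have "((\<lambda>s. psid (1 - s\<^sup>2) * (- 2 * s)) has_real_derivative
      pl (dl (dl [(1,0)])) (1 - 0\<^sup>2) * (- (2 * 0)) * (- 2 * 0) + -2 * psid (1 - 0\<^sup>2)) (at 0)"
    by (rule DERIV_mult[OF a b])
  then have "((\<lambda>s. psid (1 - s\<^sup>2) * (- 2 * s)) has_real_derivative -2 * exp (-1)) (at 0)"
    by (simp add: psid_one)
  then have "((\<lambda>s. exp 1 * (psid (1 - s\<^sup>2) * (- 2 * s))) has_real_derivative exp 1 * (-2 * exp (-1))) (at 0)"
    by (rule DERIV_cmult)
  moreover have "exp 1 * (-2 * exp (-1)) = (-2::real)" by (simp add: exp_minus)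
  ultimately have "((\<lambda>s. exp 1 * (psid (1 - s\<^sup>2) * (- 2 * s))) has_real_derivative -2) (at 0)"
    by metis
  moreover have "(\<lambda>s. exp 1 * (psid (1 - s\<^sup>2) * (- 2 * s))) = bd" by (simp add: fun_eq_iff bd_def)
  ultimately show ?thesis by metis
qed

lemma quad_Fn:
  assumes "0 < (d::real)" "d \<le> 1/10"
  shows "quadratic_crossing (Fn d 0) (0, 0)"
proof -
  have C0: "Cf d 0 = 1" by (rule Cf_zero[OF assms])
  have F: "Fn d 0 (0, 0) = 0" by (simp add: Fn_def phi_0 bet_at0 C0)
  have D1: "d1 (Fn d 0) (0, 0) = 0" by (simp add: d1_Fn bd_at0)
  have D2: "d2 (Fn d 0) (0, 0) = 0" using d2_Fn_lin[OF assms, of 0] by simp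
  have "d1 (Fn d 0) (s, 0) = bd s / 4" for s by (simp add: d1_Fn phi_0 C0)
  then have "(\<lambda>s. d1 (Fn d 0) (s, 0)) = (\<lambda>s. bd s / 4)" by (rule ext)
  moreover have "((\<lambda>s. bd s / 4) has_real_derivative -2 / 4) (at 0)"
    by (intro DERIV_cdivide bd_DERIV0)
  ultimately have D11: "d1 (d1 (Fn d 0)) (0, 0) = - 1 / 2"
    by (simp add: d1_def DERIV_imp_deriv)
  have "d1 (Fn d 0) (0, s) = 0" for s by (simp add: d1_Fn bd_at0)
  then have D21: "d2 (d1 (Fn d 0)) (0, 0) = 0" by (simp add: d2_def)
  have "d2 (Fn d 0) (s, 0) = 0" for s using d2_Fn_lin[OF assms, of 0] by simp
  then have D12: "d1 (d2 (Fn d 0)) (0, 0) = 0" by (simp add: d1_def)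
  have "((\<lambda>s. s * d / 2) has_real_derivative d / 2) (at 0)"
    by (auto intro!: derivative_eq_intros)
  then have "((\<lambda>s. d2 (Fn d 0) (0, s)) has_real_derivative d / 2) (at 0)"
  proof (rule has_field_derivative_transform_within_open[of _ _ _ "ball 0 1"])
    show "open (ball (0::real) 1)" by simp
    show "(0::real) \<in> ball 0 1" by simp
    fix s :: real assume "s \<in> ball 0 1"
    then have "\<bar>s\<bar> < 1" by simp
    then have "s\<^sup>2 \<le> 1" by (simp add: abs_square_le_1)
    then show "s * d / 2 = d2 (Fn d 0) (0, s)"
      using d2_Fn_lin[OF assms \<open>s\<^sup>2 \<le> 1\<close>, of 0 0] by (simp add: Bv_def phi_0 bet_at0)
  qed
  then have D22: "d2 (d2 (Fn d 0)) (0, 0) = d / 2"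
    by (simp add: d2_def DERIV_imp_deriv)
  show ?thesis
    unfolding quadratic_crossing_def using F D1 D2 D11 D21 D12 D22 assms by simp
qed

lemma isCont_bd: "isCont bd x"
proof -
  have a: "isCont (\<lambda>x. psid (1 - x\<^sup>2)) x"
    by (rule isCont_o2[OF _ isCont_psid]) simp
  have b: "isCont (\<lambda>x::real. - 2 * x) x" by simp
  have "isCont (\<lambda>x. exp 1 * (psid (1 - x\<^sup>2) * (- 2 * x))) x"
    by (intro isCont_mult continuous_const a b)
  then show ?thesis by (simp add: bd_def[abs_def])
qed

lemma bd_bound: "\<exists>K\<ge>0. \<forall>x\<in>{-2..2}. \<bar>bd x\<bar> \<le> K"
proof -
  have "compact (bd ` {-2..2})"
    by (rule compact_continuous_image) (auto intro: continuous_at_imp_continuous_on isCont_bd)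
  then obtain K where K: "\<forall>y\<in>bd ` {-2..2}. norm y \<le> K"
    using compact_imp_bounded bounded_iff by metis
  then show ?thesis by (intro exI[of _ "max K 0"]) auto
qed

lemma C1_bound:
  "\<exists>C. \<forall>d\<in>{0<..1/10}. \<forall>t\<in>{-1..1}. \<forall>x\<in>sq (-2) 2.
        \<bar>Fn d t x\<bar> \<le> C \<and> \<bar>d1 (Fn d t) x\<bar> \<le> C \<and> \<bar>d2 (Fn d t) x\<bar> \<le> C"
proof -
  obtain Kb where Kb: "Kb \<ge> 0" "\<forall>x\<in>{-2..2}. \<bar>bd x\<bar> \<le> Kb" using bd_bound by blast
  obtain KL where KL: "\<forall>d y. \<bar>lamd d y\<bar> \<le> KL" using lamd_bound by blast
  have KL0: "0 \<le> KL" using KL[rule_format, of 1 0] by simp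
  have main: "\<bar>Fn d t (x1, x3)\<bar> \<le> 4 + 3 * Kb + 1 + 3 * KL \<and> \<bar>d1 (Fn d t) (x1, x3)\<bar> \<le> 4 + 3 * Kb + 1 + 3 * KL
      \<and> \<bar>d2 (Fn d t) (x1, x3)\<bar> \<le> 4 + 3 * Kb + 1 + 3 * KL"
    if d: "0 < d" "d \<le> 1/10" and t: "-1 \<le> t" "t \<le> 1" and x: "-2 \<le> x1" "x1 \<le> 2" "-2 \<le> x3" "x3 \<le> 2"
    for d t x1 x3
  proof -
    have ax3: "\<bar>x3\<bar> \<le> 2" using x by auto
    have u0: "0 \<le> x3\<^sup>2" by simp
    have "\<bar>x3\<bar>\<^sup>2 \<le> 2\<^sup>2" by (rule power_mono[OF ax3]) simp
    then have u4: "x3\<^sup>2 \<le> 4" by simp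
    have B: "0 \<le> Bv d t x1" "Bv d t x1 \<le> 1 + d" using Bv_range[OF d t] by auto
    have ph: "0 \<le> phi d t" "phi d t \<le> 1 + d" using phi_range[OF d t] by auto
    have Cfb: "\<bar>Cf d (x3\<^sup>2)\<bar> \<le> 5" using Cf_abs[OF d u0] u4 by linarith
    have BC: "\<bar>Bv d t x1 * Cf d (x3\<^sup>2)\<bar> \<le> 2 * 5"
      unfolding abs_mult using B d Cfb by (intro mult_mono) auto
    have "\<bar>Fn d t (x1, x3)\<bar> = \<bar>x3\<^sup>2 - 1 + Bv d t x1 * Cf d (x3\<^sup>2)\<bar> / 4" by (simp add: Fn_eq)
    also have "\<dots> \<le> (4 + 10) / 4"
    proof (intro divide_right_mono)
      show "\<bar>x3\<^sup>2 - 1 + Bv d t x1 * Cf d (x3\<^sup>2)\<bar> \<le> 4 + 10"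
        using BC u0 u4 unfolding abs_le_iff by linarith
    qed simp
    finally have f1: "\<bar>Fn d t (x1, x3)\<bar> \<le> 4" by simp
    have bdx: "\<bar>bd x1\<bar> \<le> Kb" using Kb x by auto
    have "\<bar>phi d t * bd x1\<bar> \<le> 2 * Kb"
      unfolding abs_mult using ph d bdx Kb by (intro mult_mono) auto
    then have "\<bar>phi d t * bd x1 * Cf d (x3\<^sup>2)\<bar> \<le> (2 * Kb) * 5"
      unfolding abs_mult[of "phi d t * bd x1"] using Cfb Kb by (intro mult_mono) auto
    then have f2: "\<bar>d1 (Fn d t) (x1, x3)\<bar> \<le> 3 * Kb" using Kb by (simp add: d1_Fn)
    have lb: "\<bar>lamd d (1 - (1 - d) * x3\<^sup>2)\<bar> \<le> KL" using KL by blast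
    have "\<bar>- (1 - d) * (2 * x3)\<bar> \<le> 1 * 4" unfolding abs_mult using d ax3 by (intro mult_mono) auto
    then have "\<bar>lamd d (1 - (1 - d) * x3\<^sup>2) * (- (1 - d) * (2 * x3))\<bar> \<le> KL * 4"
      unfolding abs_mult[of "lamd d (1 - (1 - d) * x3\<^sup>2)"] using lb KL0 by (intro mult_mono) auto
    then have "\<bar>Bv d t x1 * (lamd d (1 - (1 - d) * x3\<^sup>2) * (- (1 - d) * (2 * x3)))\<bar> \<le> 2 * (KL * 4)"
      unfolding abs_mult[of "Bv d t x1"] using B d KL0 by (intro mult_mono) auto
    moreover have "\<bar>2 * x3\<bar> \<le> 4" using ax3 by simp
    ultimately have "\<bar>2 * x3 + Bv d t x1 * (lamd d (1 - (1 - d) * x3\<^sup>2) * (- (1 - d) * (2 * x3)))\<bar> \<le> 4 + 8 * KL"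
      by linarith
    then have f3: "\<bar>d2 (Fn d t) (x1, x3)\<bar> \<le> 1 + 2 * KL" by (simp add: d2_Fn_gen[OF d(1)])
    show ?thesis using f1 f2 f3 Kb KL0 by linarith
  qed
  show ?thesis
  proof (rule exI[of _ "4 + 3 * Kb + 1 + 3 * KL"], intro ballI)
    fix d t :: real and x :: "real \<times> real" assume a: "d \<in> {0<..1/10}" "t \<in> {-1..1}" "x \<in> sq (-2) 2"
    obtain x1 x3 where x: "x = (x1, x3)" by fastforce
    have b: "-2 \<le> x1" "x1 \<le> 2" "-2 \<le> x3" "x3 \<le> 2" using a(3) by (auto simp: x sq_def)
    have c: "0 < d" "d \<le> 1/10" "-1 \<le> t" "t \<le> 1" using a by auto
    show "\<bar>Fn d t x\<bar> \<le> 4 + 3 * Kb + 1 + 3 * KL \<and> \<bar>d1 (Fn d t) x\<bar> \<le> 4 + 3 * Kb + 1 + 3 * KL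
      \<and> \<bar>d2 (Fn d t) x\<bar> \<le> 4 + 3 * Kb + 1 + 3 * KL"
      unfolding x by (rule main[OF c b])
  qed
qed




lemma graph_mem: "(a, b) \<in> (\<lambda>x. (x, f x)) ` S \<longleftrightarrow> a \<in> S \<and> b = f a"
  by auto

lemma cseg: "a \<le> b \<Longrightarrow> closed_segment a b = {a..b::real}"
  by (simp add: closed_segment_eq_real_ivl)
lemma cseg': "b \<le> a \<Longrightarrow> closed_segment a b = {b..a::real}"
  by (auto simp: closed_segment_eq_real_ivl)

lemma case_neg:
  assumes d: "0 < (d::real)" "d \<le> 1/10" and t: "-1 \<le> t" "t < 0"
  shows "\<exists>\<gamma>1 \<gamma>2. arc \<gamma>1 \<and> arc \<gamma>2 \<and>
            path_image \<gamma>1 \<inter> path_image \<gamma>2 = {} \<and>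
            zeroset (Fn d t) = path_image \<gamma>1 \<union> path_image \<gamma>2 \<and>
            homotopic_paths (sq (-2) 2) \<gamma>1 (linepath (-2, 1) (2, 1)) \<and>
            homotopic_paths (sq (-2) 2) \<gamma>2 (linepath (-2, -1) (2, -1))"
proof -
  have t1: "t \<le> 1" using t by simp
  note dt = d t(1) t1
  have ph: "0 \<le> phi d t" "phi d t < 1" using phi_neg_t[OF d t] by auto
  have Bl: "Bv d t x < 1" for x
  proof -
    have "phi d t * bet x \<le> phi d t * 1" using ph bet_le1 by (intro mult_left_mono) auto
    then show ?thesis using ph by (simp add: Bv_def)
  qed
  have rp: "0 < r d t x" for x
    using r_nonneg[OF dt, of x] r_zero_iff[OF dt, of x] Bl[of x] less_imp_le[OF Bl[of x]] by fastforce
  have r1: "r d t x \<le> 1" for x using r_le1[OF dt] Bl less_imp_le by blast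
  let ?g1 = "gp (r d t) (-2) 2"
  let ?g2 = "gp (\<lambda>x. - r d t x) (-2) 2"
  have cs: "closed_segment (-2) 2 = {-2..2::real}" by (rule cseg) simp
  have a1: "arc ?g1" by (rule gp_arc) (auto intro: r_cont[OF dt])
  have a2: "arc ?g2" by (rule gp_arc) (auto intro!: continuous_intros r_cont[OF dt])
  have i1: "path_image ?g1 = (\<lambda>x. (x, r d t x)) ` {-2..2}" by (simp add: gp_image cs)
  have i2: "path_image ?g2 = (\<lambda>x. (x, - r d t x)) ` {-2..2}" by (simp add: gp_image cs)
  have disj: "path_image ?g1 \<inter> path_image ?g2 = {}"
    unfolding i1 i2 using rp by (auto simp: image_iff) (metis less_irrefl neg_less_0_iff_less)
  have zs: "zeroset (Fn d t) = path_image ?g1 \<union> path_image ?g2"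
    unfolding zeroset_eq[OF dt] i1 i2 using Bl less_imp_le by auto
  have sq_in: "(a, b) \<in> sq (-2) 2" if "-2 \<le> a" "a \<le> 2" "\<bar>b\<bar> \<le> 1" for a b
    using that by (auto simp: sq_def)
  have hom: "homotopic_paths (sq (-2) 2) g (linepath (-2, e) (2, e))"
    if g: "arc g" "pathstart g = (-2, e)" "pathfinish g = (2, e)" "path_image g \<subseteq> sq (-2) 2"
      and e: "\<bar>e\<bar> \<le> 1" for g e
  proof (rule homotopic_paths_linear)
    show "path g" using g by (simp add: arc_imp_path)
    show "path (linepath (-2, e) (2, e))" by simp
    show "pathstart (linepath (-2, e) (2, e)) = pathstart g" using g by simp
    show "pathfinish (linepath (-2, e) (2, e)) = pathfinish g" using g by simp
    fix s :: real assume s: "s \<in> {0..1}"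
    have "g s \<in> sq (-2) 2" using g s by (auto simp: path_image_def)
    moreover have "linepath (-2, e) (2, e) s \<in> sq (-2) 2"
    proof -
      have "linepath (-2, e) (2, e) s \<in> closed_segment (-2, e) (2, e)"
        using s path_image_linepath[of "(-2, e)" "(2, e)"] by (auto simp: path_image_def)
      moreover have "closed_segment (-2, e) (2, e) \<subseteq> sq (-2) 2"
        by (rule closed_segment_subset) (use e in \<open>auto intro: sq_in convex_sq\<close>)
      ultimately show ?thesis by blast
    qed
    ultimately show "closed_segment (g s) (linepath (-2, e) (2, e) s) \<subseteq> sq (-2) 2"
      by (rule closed_segment_subset) (rule convex_sq)
  qed
  have re: "r d t (-2) = 1" "r d t 2 = 1" by (auto intro: r_edge)
  have h1: "homotopic_paths (sq (-2) 2) ?g1 (linepath (-2, 1) (2, 1))"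
  proof (rule hom[OF a1])
    show "pathstart ?g1 = (-2, 1)" "pathfinish ?g1 = (2, 1)" by (simp_all add: gp_start gp_finish re)
    show "path_image ?g1 \<subseteq> sq (-2) 2" unfolding i1 using rp r1 by (auto intro!: sq_in simp: abs_le_iff less_imp_le)
  qed simp
  have h2: "homotopic_paths (sq (-2) 2) ?g2 (linepath (-2, -1) (2, -1))"
  proof (rule hom[OF a2])
    show "pathstart ?g2 = (-2, -1)" "pathfinish ?g2 = (2, -1)" by (simp_all add: gp_start gp_finish re)
    show "path_image ?g2 \<subseteq> sq (-2) 2" unfolding i2 using rp r1 by (auto intro!: sq_in simp: abs_le_iff less_imp_le)
  qed simp
  show ?thesis using a1 a2 disj zs h1 h2 by blast
qed

lemma case_zero:
  assumes d: "0 < (d::real)" "d \<le> 1/10"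
  shows "\<exists>\<gamma>1 \<gamma>2 q. arc \<gamma>1 \<and> arc \<gamma>2 \<and>
            path_image \<gamma>1 \<inter> path_image \<gamma>2 = {q} \<and>
            zeroset (Fn d 0) = path_image \<gamma>1 \<union> path_image \<gamma>2 \<and>
            pathstart \<gamma>1 = (-2, 1) \<and> pathfinish \<gamma>1 = (2, -1) \<and>
            pathstart \<gamma>2 = (-2, -1) \<and> pathfinish \<gamma>2 = (2, 1) \<and>
            quadratic_crossing (Fn d 0) q \<and>
            (\<forall>p\<in>zeroset (Fn d 0) - {q}. order_one (Fn d 0) p)"
proof -
  have dt: "0 < d" "d \<le> 1/10" "-1 \<le> (0::real)" "(0::real) \<le> 1" using d by auto
  define r0 where "r0 = r d 0"
  have Bv0: "Bv d 0 x = bet x" for x by (simp add: Bv_def phi_0)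
  have Bl: "Bv d 0 x \<le> 1" for x using bet_le1 by (simp add: Bv0)
  have r0z: "r0 x = 0 \<longleftrightarrow> x = 0" for x
  proof -
    have "r0 x = 0 \<longleftrightarrow> bet x = 1" using r_zero_iff[OF dt, of x] by (simp add: r0_def Bv0)
    moreover have "bet x = 1 \<longleftrightarrow> x = 0" using bet_at0 bet_lt1[of x] by (cases "x = 0") auto
    ultimately show ?thesis by simp
  qed
  have rc: "continuous_on S r0" for S unfolding r0_def by (rule r_cont[OF dt])
  have rc': "continuous_on S (\<lambda>x. - r0 x)" for S by (intro continuous_intros rc)
  have re: "r0 (-2) = 1" "r0 2 = 1" by (auto simp: r0_def intro: r_edge)
  have r00: "r0 0 = 0" using r0z by simp
  let ?a1 = "gp r0 (-2) 0" and ?b1 = "gp (\<lambda>x. - r0 x) 0 2"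
  let ?a2 = "gp (\<lambda>x. - r0 x) (-2) 0" and ?b2 = "gp r0 0 2"
  have csl: "closed_segment (-2) 0 = {-2..0::real}" by (rule cseg) simp
  have csr: "closed_segment 0 2 = {0..2::real}" by (rule cseg) simp
  have ia1: "path_image ?a1 = (\<lambda>x. (x, r0 x)) ` {-2..0}" by (simp add: gp_image csl)
  have ib1: "path_image ?b1 = (\<lambda>x. (x, - r0 x)) ` {0..2}" by (simp add: gp_image csr)
  have ia2: "path_image ?a2 = (\<lambda>x. (x, - r0 x)) ` {-2..0}" by (simp add: gp_image csl)
  have ib2: "path_image ?b2 = (\<lambda>x. (x, r0 x)) ` {0..2}" by (simp add: gp_image csr)
  have arcs: "arc ?a1" "arc ?b1" "arc ?a2" "arc ?b2"
    by (auto intro!: gp_arc rc rc')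
  have j1: "pathfinish ?a1 = pathstart ?b1" by (simp add: gp_start gp_finish r00)
  have j2: "pathfinish ?a2 = pathstart ?b2" by (simp add: gp_start gp_finish r00)
  have arc1: "arc (?a1 +++ ?b1)"
  proof (rule arc_join[OF arcs(1,2) j1])
    show "path_image ?a1 \<inter> path_image ?b1 \<subseteq> {pathstart ?b1}"
      unfolding ia1 ib1 by (auto simp: gp_start r00)
  qed
  have arc2: "arc (?a2 +++ ?b2)"
  proof (rule arc_join[OF arcs(3,4) j2])
    show "path_image ?a2 \<inter> path_image ?b2 \<subseteq> {pathstart ?b2}"
      unfolding ia2 ib2 by (auto simp: gp_start r00)
  qed
  have im1: "path_image (?a1 +++ ?b1) = (\<lambda>x. (x, r0 x)) ` {-2..0} \<union> (\<lambda>x. (x, - r0 x)) ` {0..2}"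
    using path_image_join[OF j1] ia1 ib1 by simp
  have im2: "path_image (?a2 +++ ?b2) = (\<lambda>x. (x, - r0 x)) ` {-2..0} \<union> (\<lambda>x. (x, r0 x)) ` {0..2}"
    using path_image_join[OF j2] ia2 ib2 by simp
  have int: "path_image (?a1 +++ ?b1) \<inter> path_image (?a2 +++ ?b2) = {(0, 0)}"
  proof
    show "{(0, 0)} \<subseteq> path_image (?a1 +++ ?b1) \<inter> path_image (?a2 +++ ?b2)"
      unfolding im1 im2 using r00 by (force simp: image_iff)
    show "path_image (?a1 +++ ?b1) \<inter> path_image (?a2 +++ ?b2) \<subseteq> {(0, 0)}"
    proof
      fix p assume p: "p \<in> path_image (?a1 +++ ?b1) \<inter> path_image (?a2 +++ ?b2)"
      obtain x y where pxy: "p = (x, y)" by fastforce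
      have "x = 0"
      proof (rule ccontr)
        assume x0: "x \<noteq> 0"
        then have "r0 x \<noteq> 0" using r0z by simp
        then show False using p x0 unfolding pxy im1 im2 by (auto simp: image_iff)
      qed
      then show "p \<in> {(0, 0)}" using p unfolding pxy im1 im2 by (auto simp: r00)
    qed
  qed
  have zs: "zeroset (Fn d 0) = path_image (?a1 +++ ?b1) \<union> path_image (?a2 +++ ?b2)"
  proof -
    have "zeroset (Fn d 0) = {(x1, x3). -2 \<le> x1 \<and> x1 \<le> 2 \<and> (x3 = r0 x1 \<or> x3 = - r0 x1)}"
      unfolding zeroset_eq[OF dt] r0_def using Bl by auto
    also have "\<dots> = path_image (?a1 +++ ?b1) \<union> path_image (?a2 +++ ?b2)"
      unfolding im1 im2 by (auto simp: image_iff) 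
    finally show ?thesis .
  qed
  have ends: "pathstart (?a1 +++ ?b1) = (-2, 1)" "pathfinish (?a1 +++ ?b1) = (2, -1)"
    "pathstart (?a2 +++ ?b2) = (-2, -1)" "pathfinish (?a2 +++ ?b2) = (2, 1)"
    by (simp_all add: gp_start gp_finish re)
  have oo: "\<forall>p\<in>zeroset (Fn d 0) - {(0, 0)}. order_one (Fn d 0) p"
  proof
    fix p assume p: "p \<in> zeroset (Fn d 0) - {(0, 0)}"
    obtain x y where pxy: "p = (x, y)" by fastforce
    show "order_one (Fn d 0) p" unfolding pxy
      by (rule order_one_Fn[OF dt]) (use p pxy in auto)
  qed
  show ?thesis
    using arc1 arc2 int zs ends quad_Fn[OF d] oo by blast
qed

lemma exp_le_iff_ln: "0 < (c::real) \<Longrightarrow> exp a \<le> c \<longleftrightarrow> a \<le> ln c"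
  by (metis exp_le_cancel_iff exp_ln)

lemma exp_eq_iff_ln: "0 < (c::real) \<Longrightarrow> exp a = c \<longleftrightarrow> a = ln c"
  by (metis exp_ln ln_exp)

lemma bet_le_c:
  assumes c: "0 < c" "c < 1" and x: "x\<^sup>2 < 1"
  shows "bet x \<le> c \<longleftrightarrow> 1 - 1 / (1 - ln c) \<le> x\<^sup>2"
proof -
  have lc: "ln c < 0" using c by simp
  define m where "m = 1 - ln c"
  have m: "1 < m" using lc by (simp add: m_def)
  have y: "0 < 1 - x\<^sup>2" using x by simp
  have "bet x \<le> c \<longleftrightarrow> 1 - inverse (1 - x\<^sup>2) \<le> ln c"
    using bet_formula[OF x] exp_le_iff_ln[OF c(1)] by simp
  also have "\<dots> \<longleftrightarrow> m \<le> 1 / (1 - x\<^sup>2)" unfolding m_def inverse_eq_divide by linarith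
  also have "\<dots> \<longleftrightarrow> m * (1 - x\<^sup>2) \<le> 1" using y by (simp add: pos_le_divide_eq)
  also have "\<dots> \<longleftrightarrow> 1 - 1 / m \<le> x\<^sup>2" using m by (simp add: field_simps)
  finally show ?thesis by (simp add: m_def)
qed

lemma bet_eq_c:
  assumes c: "0 < c" "c < 1" and x: "x\<^sup>2 < 1"
  shows "bet x = c \<longleftrightarrow> 1 - 1 / (1 - ln c) = x\<^sup>2"
proof -
  have lc: "ln c < 0" using c by simp
  define m where "m = 1 - ln c"
  have m: "1 < m" using lc by (simp add: m_def)
  have y: "0 < 1 - x\<^sup>2" using x by simp
  have "bet x = c \<longleftrightarrow> 1 - inverse (1 - x\<^sup>2) = ln c"
    using bet_formula[OF x] exp_eq_iff_ln[OF c(1)] by simp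
  also have "\<dots> \<longleftrightarrow> m = 1 / (1 - x\<^sup>2)" by (auto simp: m_def inverse_eq_divide)
  also have "\<dots> \<longleftrightarrow> m * (1 - x\<^sup>2) = 1" using y by (auto simp: field_simps)
  also have "\<dots> \<longleftrightarrow> 1 - 1 / m = x\<^sup>2" using m by (auto simp: field_simps)
  finally show ?thesis by (simp add: m_def)
qed

lemma case_pos:
  assumes d: "0 < (d::real)" "d \<le> 1/10" and t: "0 < t" "t \<le> 1"
  shows "(\<exists>\<gamma>1 \<gamma>2. arc \<gamma>1 \<and> arc \<gamma>2 \<and>
            path_image \<gamma>1 \<inter> path_image \<gamma>2 = {} \<and>
            zeroset (Fn d t) = path_image \<gamma>1 \<union> path_image \<gamma>2 \<and>
            pathstart \<gamma>1 = (-2, 1) \<and> pathfinish \<gamma>1 = (-2, -1) \<and>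
            pathstart \<gamma>2 = (2, 1) \<and> pathfinish \<gamma>2 = (2, -1))
          \<and> (\<forall>p\<in>zeroset (Fn d t). order_one (Fn d t) p)"
proof -
  have dt: "0 < d" "d \<le> 1/10" "-1 \<le> t" "t \<le> 1" using d t by auto
  have ph: "phi d t = 1 + t * d" by (rule phi_pos_t[OF t(1)])
  have ph1: "1 < phi d t" using ph t d by simp
  define c where "c = 1 / phi d t"
  have c: "0 < c" "c < 1" using ph1 by (auto simp: c_def)
  define q where "q = 1 - 1 / (1 - ln c)"
  have lc: "ln c < 0" using c by simp
  have q: "0 < q" "q < 1" using lc by (auto simp: q_def field_simps)
  define \<rho> where "\<rho> = sqrt q"
  have \<rho>: "0 < \<rho>" "\<rho> < 1" using q by (auto simp: \<rho>_def)
  have Ble: "Bv d t x \<le> 1 \<longleftrightarrow> bet x \<le> c" for x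
    using ph1 by (simp add: Bv_def c_def pos_le_divide_eq mult.commute)
  have Beq: "Bv d t x = 1 \<longleftrightarrow> bet x = c" for x
    using ph1 by (auto simp: Bv_def c_def field_simps)
  have big: "1 \<le> \<bar>x\<bar>" if "\<not> x\<^sup>2 < 1" for x :: real
  proof (rule ccontr)
    assume "\<not> 1 \<le> \<bar>x\<bar>"
    then have "\<bar>x\<bar> < 1" by simp
    then have "x\<^sup>2 < 1" by (simp add: abs_square_less_1)
    then show False using that by simp
  qed
  have key1: "Bv d t x \<le> 1 \<longleftrightarrow> \<rho> \<le> \<bar>x\<bar>" for x
  proof (cases "x\<^sup>2 < 1")
    case True
    have "Bv d t x \<le> 1 \<longleftrightarrow> q \<le> x\<^sup>2" using Ble bet_le_c[OF c True] by (simp add: q_def)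
    also have "\<dots> \<longleftrightarrow> sqrt q \<le> sqrt (x\<^sup>2)" by (rule real_sqrt_le_iff[symmetric])
    finally show ?thesis by (simp add: \<rho>_def)
  next
    case False
    then show ?thesis using big[OF False] \<rho> bet_zero[of x] c Ble by auto
  qed
  have key2: "Bv d t x = 1 \<longleftrightarrow> \<bar>x\<bar> = \<rho>" for x
  proof (cases "x\<^sup>2 < 1")
    case True
    have "Bv d t x = 1 \<longleftrightarrow> q = x\<^sup>2" using Beq bet_eq_c[OF c True] by (simp add: q_def)
    also have "\<dots> \<longleftrightarrow> sqrt q = sqrt (x\<^sup>2)" by (rule real_sqrt_eq_iff[symmetric])
    finally show ?thesis by (auto simp: \<rho>_def)
  next
    case False
    then show ?thesis using big[OF False] \<rho> bet_zero[of x] c Beq by auto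
  qed
  define rt where "rt = r d t"
  have rz: "rt x = 0 \<longleftrightarrow> \<bar>x\<bar> = \<rho>" for x
    using r_zero_iff[OF dt, of x] key2[of x] by (simp add: rt_def)
  have rc: "continuous_on S rt" for S unfolding rt_def by (rule r_cont[OF dt])
  have rc': "continuous_on S (\<lambda>x. - rt x)" for S by (intro continuous_intros rc)
  have re: "rt (-2) = 1" "rt 2 = 1" by (auto simp: rt_def intro: r_edge)
  let ?a1 = "gp rt (-2) (-\<rho>)" and ?b1 = "gp (\<lambda>x. - rt x) (-2) (-\<rho>)"
  let ?a2 = "gp rt 2 \<rho>" and ?b2 = "gp (\<lambda>x. - rt x) 2 \<rho>"
  have csl: "closed_segment (-2) (-\<rho>) = {-2..-\<rho>}" by (rule cseg) (use \<rho> in simp)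
  have csr: "closed_segment 2 \<rho> = {\<rho>..2}" by (rule cseg') (use \<rho> in simp)
  have ia1: "path_image ?a1 = (\<lambda>x. (x, rt x)) ` {-2..-\<rho>}" by (simp add: gp_image csl)
  have ib1: "path_image (reversepath ?b1) = (\<lambda>x. (x, - rt x)) ` {-2..-\<rho>}"
    by (simp add: gp_image csl path_image_reversepath)
  have ia2: "path_image ?a2 = (\<lambda>x. (x, rt x)) ` {\<rho>..2}" by (simp add: gp_image csr)
  have ib2: "path_image (reversepath ?b2) = (\<lambda>x. (x, - rt x)) ` {\<rho>..2}"
    by (simp add: gp_image csr path_image_reversepath)
  have arcs: "arc ?a1" "arc (reversepath ?b1)" "arc ?a2" "arc (reversepath ?b2)"
    using \<rho> by (auto intro!: gp_arc rc rc' arc_reversepath)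
  have rr: "rt (-\<rho>) = 0" "rt \<rho> = 0" using rz \<rho> by auto
  have j1: "pathfinish ?a1 = pathstart (reversepath ?b1)" by (simp add: gp_start gp_finish rr)
  have j2: "pathfinish ?a2 = pathstart (reversepath ?b2)" by (simp add: gp_start gp_finish rr)
  have arc1: "arc (?a1 +++ reversepath ?b1)"
  proof (rule arc_join[OF arcs(1,2) j1])
    show "path_image ?a1 \<inter> path_image (reversepath ?b1) \<subseteq> {pathstart (reversepath ?b1)}"
    proof
      fix p assume p: "p \<in> path_image ?a1 \<inter> path_image (reversepath ?b1)"
      obtain x y where pxy: "p = (x, y)" by fastforce
      have x: "-2 \<le> x" "x \<le> -\<rho>" "y = rt x" "y = - rt x" using p unfolding pxy ia1 ib1 by auto
      then have "rt x = 0" by simp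
      then have "x = -\<rho>" using rz[of x] x \<rho> by auto
      then show "p \<in> {pathstart (reversepath ?b1)}" using x rr by (simp add: pxy gp_finish)
    qed
  qed
  have arc2: "arc (?a2 +++ reversepath ?b2)"
  proof (rule arc_join[OF arcs(3,4) j2])
    show "path_image ?a2 \<inter> path_image (reversepath ?b2) \<subseteq> {pathstart (reversepath ?b2)}"
    proof
      fix p assume p: "p \<in> path_image ?a2 \<inter> path_image (reversepath ?b2)"
      obtain x y where pxy: "p = (x, y)" by fastforce
      have x: "\<rho> \<le> x" "x \<le> 2" "y = rt x" "y = - rt x" using p unfolding pxy ia2 ib2 by auto
      then have "rt x = 0" by simp
      then have "x = \<rho>" using rz[of x] x \<rho> by auto
      then show "p \<in> {pathstart (reversepath ?b2)}" using x rr by (simp add: pxy gp_finish)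
    qed
  qed
  have im1: "path_image (?a1 +++ reversepath ?b1) = (\<lambda>x. (x, rt x)) ` {-2..-\<rho>} \<union> (\<lambda>x. (x, - rt x)) ` {-2..-\<rho>}"
    using path_image_join[OF j1] ia1 ib1 by simp
  have im2: "path_image (?a2 +++ reversepath ?b2) = (\<lambda>x. (x, rt x)) ` {\<rho>..2} \<union> (\<lambda>x. (x, - rt x)) ` {\<rho>..2}"
    using path_image_join[OF j2] ia2 ib2 by simp
  have disj: "path_image (?a1 +++ reversepath ?b1) \<inter> path_image (?a2 +++ reversepath ?b2) = {}"
    unfolding im1 im2 using \<rho> by auto
  have zs: "zeroset (Fn d t) = path_image (?a1 +++ reversepath ?b1) \<union> path_image (?a2 +++ reversepath ?b2)"
  proof -
    have "zeroset (Fn d t) = {(x1, x3). -2 \<le> x1 \<and> x1 \<le> 2 \<and> \<rho> \<le> \<bar>x1\<bar> \<and> (x3 = rt x1 \<or> x3 = - rt x1)}"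
      unfolding zeroset_eq[OF dt] rt_def key1 by simp
    also have "\<dots> = path_image (?a1 +++ reversepath ?b1) \<union> path_image (?a2 +++ reversepath ?b2)"
      unfolding im1 im2 using \<rho> by (auto simp: image_iff abs_if split: if_splits)
    finally show ?thesis .
  qed
  have ends: "pathstart (?a1 +++ reversepath ?b1) = (-2, 1)" "pathfinish (?a1 +++ reversepath ?b1) = (-2, -1)"
    "pathstart (?a2 +++ reversepath ?b2) = (2, 1)" "pathfinish (?a2 +++ reversepath ?b2) = (2, -1)"
    by (simp_all add: gp_start gp_finish re)
  have oo: "\<forall>p\<in>zeroset (Fn d t). order_one (Fn d t) p"
  proof
    fix p assume p: "p \<in> zeroset (Fn d t)"
    obtain x y where pxy: "p = (x, y)" by fastforce
    have "\<rho> \<le> \<bar>x\<bar>" using p unfolding pxy zeroset_eq[OF dt] key1 by auto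
    then have "x \<noteq> 0" using \<rho> by auto
    then show "order_one (Fn d t) p" unfolding pxy
      by (intro order_one_Fn[OF dt]) (use p pxy in auto)
  qed
  show ?thesis using arc1 arc2 disj zs ends oo by blast
qed




lemma outside:
  assumes d: "0 < (d::real)" "d \<le> 1/10" and x: "x \<in> sq (-2) 2 - sq (-1 - 2*d) (1 + 2*d)"
  shows "Fn d t x = Fn d (-1) x"
proof -
  obtain x1 x3 where xx: "x = (x1, x3)" by fastforce
  have "\<not> (-1 - 2*d \<le> x1 \<and> x1 \<le> 1 + 2*d \<and> -1 - 2*d \<le> x3 \<and> x3 \<le> 1 + 2*d)"
    using x by (auto simp: xx sq_def)
  then consider "1 + 2*d < \<bar>x1\<bar>" | "1 + 2*d < \<bar>x3\<bar>" by linarith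
  then show ?thesis
  proof cases
    case 1
    have "1 \<le> \<bar>x1\<bar>" using 1 d by linarith
    then have "1\<^sup>2 \<le> \<bar>x1\<bar>\<^sup>2" by (rule power_mono) simp
    then have "bet x1 = 0" by (intro bet_zero) simp
    then show ?thesis by (simp add: xx Fn_def)
  next
    case 2
    have "(1 + 2*d)\<^sup>2 < \<bar>x3\<bar>\<^sup>2" using 2 d by (intro power_strict_mono) auto
    then have "Cf d (x3\<^sup>2) = 0" using d by (intro Cf_out) auto
    then show ?thesis by (simp add: xx Fn_def)
  qed
qed

theorem mainTheorem8:
  "\<exists>F :: real \<Rightarrow> real \<Rightarrow> real \<times> real \<Rightarrow> real.
    (\<forall>\<delta>\<in>{0<..1/10}.
       (\<exists>U. open U \<and> {-1..1} \<times> sq (-2) 2 \<subseteq> U \<and>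
            smooth_on U (\<lambda>(t, x). F \<delta> t x))
     \<and> (\<forall>x\<in>sq (-2) 2. F \<delta> (-1) x = f0 x)
     \<and> (\<forall>t\<in>{-1..1}. \<forall>x\<in>sq (-2) 2 - sq (-1 - 2*\<delta>) (1 + 2*\<delta>). F \<delta> t x = F \<delta> (-1) x)
     \<and> (\<forall>t\<in>{-1..<0}. (\<exists>\<gamma>1 \<gamma>2. arc \<gamma>1 \<and> arc \<gamma>2 \<and>
            path_image \<gamma>1 \<inter> path_image \<gamma>2 = {} \<and>
            zeroset (F \<delta> t) = path_image \<gamma>1 \<union> path_image \<gamma>2 \<and>
            homotopic_paths (sq (-2) 2) \<gamma>1 (linepath (-2, 1) (2, 1)) \<and>
            homotopic_paths (sq (-2) 2) \<gamma>2 (linepath (-2, -1) (2, -1)))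
          \<and> (\<forall>p\<in>zeroset (F \<delta> t). order_one (F \<delta> t) p))
     \<and> (\<exists>\<gamma>1 \<gamma>2 q. arc \<gamma>1 \<and> arc \<gamma>2 \<and>
            path_image \<gamma>1 \<inter> path_image \<gamma>2 = {q} \<and>
            zeroset (F \<delta> 0) = path_image \<gamma>1 \<union> path_image \<gamma>2 \<and>
            pathstart \<gamma>1 = (-2, 1) \<and> pathfinish \<gamma>1 = (2, -1) \<and>
            pathstart \<gamma>2 = (-2, -1) \<and> pathfinish \<gamma>2 = (2, 1) \<and>
            quadratic_crossing (F \<delta> 0) q \<and>
            (\<forall>p\<in>zeroset (F \<delta> 0) - {q}. order_one (F \<delta> 0) p))
     \<and> (\<forall>t\<in>{0<..1}. (\<exists>\<gamma>1 \<gamma>2. arc \<gamma>1 \<and> arc \<gamma>2 \<and>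
            path_image \<gamma>1 \<inter> path_image \<gamma>2 = {} \<and>
            zeroset (F \<delta> t) = path_image \<gamma>1 \<union> path_image \<gamma>2 \<and>
            pathstart \<gamma>1 = (-2, 1) \<and> pathfinish \<gamma>1 = (-2, -1) \<and>
            pathstart \<gamma>2 = (2, 1) \<and> pathfinish \<gamma>2 = (2, -1))
          \<and> (\<forall>p\<in>zeroset (F \<delta> t). order_one (F \<delta> t) p)))
  \<and> (\<exists>C. \<forall>\<delta>\<in>{0<..1/10}. \<forall>t\<in>{-1..1}. \<forall>x\<in>sq (-2) 2.
        \<bar>F \<delta> t x\<bar> \<le> C \<and> \<bar>d1 (F \<delta> t) x\<bar> \<le> C \<and> \<bar>d2 (F \<delta> t) x\<bar> \<le> C)"
proof (rule exI[of _ Fn], intro conjI, rule ballI, intro conjI)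
  fix \<delta> :: real assume "\<delta> \<in> {0<..1/10}"
  then have d: "0 < \<delta>" "\<delta> \<le> 1/10" by auto
  show "\<exists>U. open U \<and> {-1..1} \<times> sq (-2) 2 \<subseteq> U \<and> smooth_on U (\<lambda>(t, x). Fn \<delta> t x)"
    by (intro exI[of _ UNIV] conjI open_UNIV subset_UNIV smooth_Fn)
next
  fix \<delta> :: real assume "\<delta> \<in> {0<..1/10}"
  then have d: "0 < \<delta>" "\<delta> \<le> 1/10" by auto
  show "\<forall>x\<in>sq (-2) 2. Fn \<delta> (-1) x = f0 x"
    by (simp add: Fn_def phi_m1 f0_def)
next
  fix \<delta> :: real assume "\<delta> \<in> {0<..1/10}"
  then have d: "0 < \<delta>" "\<delta> \<le> 1/10" by auto
  show "\<forall>t\<in>{-1..1}. \<forall>x\<in>sq (-2) 2 - sq (-1 - 2*\<delta>) (1 + 2*\<delta>). Fn \<delta> t x = Fn \<delta> (-1) x"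
    using outside[OF d] by blast
next
  fix \<delta> :: real assume "\<delta> \<in> {0<..1/10}"
  then have d: "0 < \<delta>" "\<delta> \<le> 1/10" by auto
  show "\<forall>t\<in>{-1..<0}. (\<exists>\<gamma>1 \<gamma>2. arc \<gamma>1 \<and> arc \<gamma>2 \<and>
            path_image \<gamma>1 \<inter> path_image \<gamma>2 = {} \<and>
            zeroset (Fn \<delta> t) = path_image \<gamma>1 \<union> path_image \<gamma>2 \<and>
            homotopic_paths (sq (-2) 2) \<gamma>1 (linepath (-2, 1) (2, 1)) \<and>
            homotopic_paths (sq (-2) 2) \<gamma>2 (linepath (-2, -1) (2, -1)))
          \<and> (\<forall>p\<in>zeroset (Fn \<delta> t). order_one (Fn \<delta> t) p)"
  proof
    fix t :: real assume "t \<in> {-1..<0}"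
    then have t: "-1 \<le> t" "t < 0" by auto
    have dt: "0 < \<delta>" "\<delta> \<le> 1/10" "-1 \<le> t" "t \<le> 1" using d t by auto
    have oo: "order_one (Fn \<delta> t) p" if p: "p \<in> zeroset (Fn \<delta> t)" for p
    proof -
      obtain x y where pxy: "p = (x, y)" by fastforce
      have nz: "x \<noteq> 0 \<or> y \<noteq> 0"
      proof (rule ccontr)
        assume "\<not> (x \<noteq> 0 \<or> y \<noteq> 0)"
        then have xy: "x = 0" "y = 0" by auto
        then have "r \<delta> t 0 = 0" using p unfolding pxy zeroset_eq[OF dt] by auto
        then have "Bv \<delta> t 0 = 1" using r_zero_iff[OF dt] by simp
        moreover have "Bv \<delta> t 0 < 1" using phi_neg_t[OF d t] by (simp add: Bv_def bet_at0)
        ultimately show False by simp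
      qed
      show ?thesis unfolding pxy by (rule order_one_Fn[OF dt _ nz]) (use p pxy in simp)
    qed
    show "(\<exists>\<gamma>1 \<gamma>2. arc \<gamma>1 \<and> arc \<gamma>2 \<and>
            path_image \<gamma>1 \<inter> path_image \<gamma>2 = {} \<and>
            zeroset (Fn \<delta> t) = path_image \<gamma>1 \<union> path_image \<gamma>2 \<and>
            homotopic_paths (sq (-2) 2) \<gamma>1 (linepath (-2, 1) (2, 1)) \<and>
            homotopic_paths (sq (-2) 2) \<gamma>2 (linepath (-2, -1) (2, -1)))
          \<and> (\<forall>p\<in>zeroset (Fn \<delta> t). order_one (Fn \<delta> t) p)"
      using case_neg[OF d t] oo by blast
  qed
next
  fix \<delta> :: real assume "\<delta> \<in> {0<..1/10}"
  then have d: "0 < \<delta>" "\<delta> \<le> 1/10" by auto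
  show "\<exists>\<gamma>1 \<gamma>2 q. arc \<gamma>1 \<and> arc \<gamma>2 \<and>
            path_image \<gamma>1 \<inter> path_image \<gamma>2 = {q} \<and>
            zeroset (Fn \<delta> 0) = path_image \<gamma>1 \<union> path_image \<gamma>2 \<and>
            pathstart \<gamma>1 = (-2, 1) \<and> pathfinish \<gamma>1 = (2, -1) \<and>
            pathstart \<gamma>2 = (-2, -1) \<and> pathfinish \<gamma>2 = (2, 1) \<and>
            quadratic_crossing (Fn \<delta> 0) q \<and>
            (\<forall>p\<in>zeroset (Fn \<delta> 0) - {q}. order_one (Fn \<delta> 0) p)"
    by (rule case_zero[OF d])
next
  fix \<delta> :: real assume "\<delta> \<in> {0<..1/10}"
  then have d: "0 < \<delta>" "\<delta> \<le> 1/10" by auto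
  show "\<forall>t\<in>{0<..1}. (\<exists>\<gamma>1 \<gamma>2. arc \<gamma>1 \<and> arc \<gamma>2 \<and>
            path_image \<gamma>1 \<inter> path_image \<gamma>2 = {} \<and>
            zeroset (Fn \<delta> t) = path_image \<gamma>1 \<union> path_image \<gamma>2 \<and>
            pathstart \<gamma>1 = (-2, 1) \<and> pathfinish \<gamma>1 = (-2, -1) \<and>
            pathstart \<gamma>2 = (2, 1) \<and> pathfinish \<gamma>2 = (2, -1))
          \<and> (\<forall>p\<in>zeroset (Fn \<delta> t). order_one (Fn \<delta> t) p)"
    using case_pos[OF d] by auto
next
  show "\<exists>C. \<forall>\<delta>\<in>{0<..1/10}. \<forall>t\<in>{-1..1}. \<forall>x\<in>sq (-2) 2.
        \<bar>Fn \<delta> t x\<bar> \<le> C \<and> \<bar>d1 (Fn \<delta> t) x\<bar> \<le> C \<and> \<bar>d2 (Fn \<delta> t) x\<bar> \<le> C"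
    by (rule C1_bound)
qed


end
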